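(* Let $W=(V,B)$ be a non-degenerate formed space of Witt index $\omega\ge2$ as in the context, let $1\le k<\omega$, let $\Gamma$ be the polar Grassmann graph on singular $k$-subspaces, and let $X\ne Y$ be vertices of $\Gamma$. Put $m=k-\dim(X\cap Y)$. (1) If the pair $X,Y$ is not opposite, then $d(X,Y)=m$, and every geodesic from $X$ to $Y$ has the form $(X_0=X,X_1,\dots,X_m=Y)$ where, for some basis $w_1,\dots,w_{k-m}$ of $X\cap Y$ and vectors $x_1,\dots,x_m,y_1,\dots,y_m$ with $X=\langle x_1,\dots,x_m,w_1,\dots,w_{k-m}\rangle$ and $Y=\langle y_1,\dots,y_m,w_1,\dots,w_{k-m}\rangle$, one has $X_i=\langle x_1,\dots,x_{m-i},y_{m-i+1},\dots,y_m,w_1,\dots,w_{k-m}\rangle$ for $0\le i\le m$, and: (a) $B(x_i,y_j)=0$ for $1\le i\le j\le m$; (b) for each $2\le i\le m$, either $B(x_i,y_j)=0$ for all $1\le j<i$, or there is a unique $i'<i$ with $B(x_i,y_{i'})=1$ and $B(x_i,y_j)=0$ for all other $1\le j<i$; and if $i_1\ne i_2$ both have such indices $i_1',i_2'$, then $i_1'\ne i_2'$. (2) If the pair $X,Y$ is opposite, then $d(X,Y)=m+1$, and every geodesic from $X$ to $Y$ has the form $(X,X_0,X_1,\dots,X_m=Y)$ where, for some basis $w_1,\dots,w_{k-m}$ of $X\cap Y$ and vectors $x_0,x_1,\dots,x_m,y_1,\dots,y_m$ with $X=\langle x_1,\dots,x_m,w_1,\dots,w_{k-m}\rangle$ and $Y=\langle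 y_1,\dots,y_m,w_1,\dots,w_{k-m}\rangle$, one has $X_i=\langle x_0,x_1,\dots,x_{m-i-1},y_{m-i+1},\dots,y_m,w_1,\dots,w_{k-m}\rangle$ for $0\le i\le m$, and: $B(x_i,y_j)=0$ for $0\le i<j\le m$; $B(x_i,y_i)=1$ for $1\le i\le m$; $B(x_i,y_j)=0$ for $1\le j<i\le m$. In particular, $\Gamma$ has diameter $k+1$.
   Context: $V$ is a finite-dimensional vector space over $\mathbb{F}_q$ and $W=(V,B)$ is one of: a symplectic space of dimension $2\omega$; an orthogonal space of dimension $2\omega+1$, of plus type of dimension $2\omega$, or of minus type of dimension $2\omega+2$ (non-degenerate quadratic form, $B$ its associated bilinear form); a unitary space of dimension $2\omega+1$ or $2\omega$ ($q$ a square, $B$ Hermitian). For $U\le V$, $U^\perp=\{v: B(u,v)=0\ \forall u\in U\}$. A subspace is singular if it is totally isotropic (totally singular in the orthogonal case); maximal singular subspaces have dimension $\omega$. For $k<\omega$, the polar Grassmann graph has as vertices the singular $k$-subspaces, two distinct vertices $u,v$ adjacent iff $u+v$ is a singular $(k+1)$-subspace. Two distinct vertices $X,Y$ are called opposite if $X^\perp\cap Y=X\cap Y$, i.e. for every $y\in Y\setminus X$ there is $x\in X\setminus Y$ with $B(x,y)\ne0$. A geodesic from $X$ to $Y$ is a shortest path, written as its vertex sequence. *)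

theory Defs
  imports Complex_Main
begin

(* The ambient space V is the whole type 'v, a vector space over the finite
   field 'a with scalar multiplication scale; subspaces are subsets of 'v. *)

datatype form_kind = Symplectic | Orthogonal | Unitary

definition fin_dim :: "('a::field \<Rightarrow> 'v::ab_group_add \<Rightarrow> 'v) \<Rightarrow> bool" where
  "fin_dim scale \<longleftrightarrow> (\<exists>S. finite S \<and> module.span scale S = UNIV)"

definition bilinear_form :: "('a::field \<Rightarrow> 'v::ab_group_add \<Rightarrow> 'v) \<Rightarrow> ('v \<Rightarrow> 'v \<Rightarrow> 'a) \<Rightarrow> bool" where
  "bilinear_form scale B \<longleftrightarrow>
     (\<forall>u v w. B (u + v) w = B u w + B v w) \<and> (\<forall>u v w. B u (v + w) = B u v + B u w) \<and>
     (\<forall>c u v. B (scale c u) v = c * B u v) \<and> (\<forall>c u v. B u (scale c v) = c * B u v)"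

definition involutory_automorphism :: "('a::field \<Rightarrow> 'a) \<Rightarrow> bool" where
  "involutory_automorphism \<sigma> \<longleftrightarrow>
     (\<forall>a b. \<sigma> (a + b) = \<sigma> a + \<sigma> b) \<and> (\<forall>a b. \<sigma> (a * b) = \<sigma> a * \<sigma> b) \<and>
     (\<forall>a. \<sigma> (\<sigma> a) = a) \<and> (\<exists>a. \<sigma> a \<noteq> a)"

definition hermitian_form :: "('a::field \<Rightarrow> 'v::ab_group_add \<Rightarrow> 'v) \<Rightarrow> ('a \<Rightarrow> 'a) \<Rightarrow> ('v \<Rightarrow> 'v \<Rightarrow> 'a) \<Rightarrow> bool" where
  "hermitian_form scale \<sigma> B \<longleftrightarrow>
     (\<forall>u v w. B (u + v) w = B u w + B v w) \<and> (\<forall>u v w. B u (v + w) = B u v + B u w) \<and>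
     (\<forall>c u v. B (scale c u) v = c * B u v) \<and> (\<forall>c u v. B u (scale c v) = \<sigma> c * B u v) \<and>
     (\<forall>u v. B v u = \<sigma> (B u v))"

definition quadratic_form :: "('a::field \<Rightarrow> 'v::ab_group_add \<Rightarrow> 'v) \<Rightarrow> ('v \<Rightarrow> 'a) \<Rightarrow> ('v \<Rightarrow> 'v \<Rightarrow> 'a) \<Rightarrow> bool" where
  "quadratic_form scale Q B \<longleftrightarrow>
     (\<forall>c v. Q (scale c v) = c ^ 2 * Q v) \<and> (\<forall>u v. B u v = Q (u + v) - Q u - Q v) \<and>
     bilinear_form scale B"

definition nondegenerate_form :: "('v::zero \<Rightarrow> 'v \<Rightarrow> 'a::field) \<Rightarrow> bool" where
  "nondegenerate_form B \<longleftrightarrow> (\<forall>v. (\<forall>u. B u v = 0) \<longrightarrow> v = 0)"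

definition nondegenerate_quadratic :: "('v::zero \<Rightarrow> 'a::field) \<Rightarrow> ('v \<Rightarrow> 'v \<Rightarrow> 'a) \<Rightarrow> bool" where
  "nondegenerate_quadratic Q B \<longleftrightarrow> (\<forall>v. (\<forall>u. B u v = 0) \<and> Q v = 0 \<longrightarrow> v = 0)"

definition perp :: "('v \<Rightarrow> 'v \<Rightarrow> 'a::zero) \<Rightarrow> 'v set \<Rightarrow> 'v set" where
  "perp B U = {v. \<forall>u\<in>U. B u v = 0}"

definition singular :: "form_kind \<Rightarrow> ('a::field \<Rightarrow> 'v::ab_group_add \<Rightarrow> 'v) \<Rightarrow> ('v \<Rightarrow> 'v \<Rightarrow> 'a) \<Rightarrow> ('v \<Rightarrow> 'a) \<Rightarrow> 'v set \<Rightarrow> bool" where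
  "singular t scale B Q U \<longleftrightarrow> module.subspace scale U \<and>
     (if t = Orthogonal then (\<forall>u\<in>U. Q u = 0) else (\<forall>u\<in>U. \<forall>v\<in>U. B u v = 0))"

(* For the orthogonal kind the
   dimensions 2\<omega>+1, 2\<omega>, 2\<omega>+2 with Witt index \<omega> are the parabolic, plus and minus types. *)
definition formed_space :: "form_kind \<Rightarrow> ('a::{field,finite} \<Rightarrow> 'v::ab_group_add \<Rightarrow> 'v) \<Rightarrow> ('v \<Rightarrow> 'v \<Rightarrow> 'a) \<Rightarrow> ('v \<Rightarrow> 'a) \<Rightarrow> nat \<Rightarrow> bool" where
  "formed_space t scale B Q \<omega> \<longleftrightarrow>
     vector_space scale \<and> fin_dim scale \<and>
     (case t of
        Symplectic \<Rightarrow> bilinear_form scale B \<and> (\<forall>v. B v v = 0) \<and> nondegenerate_form B \<and>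
                       vector_space.dim scale (UNIV::'v set) = 2 * \<omega>
      | Orthogonal \<Rightarrow> quadratic_form scale Q B \<and> nondegenerate_quadratic Q B \<and>
                       vector_space.dim scale (UNIV::'v set) \<in> {2 * \<omega> + 1, 2 * \<omega>, 2 * \<omega> + 2}
      | Unitary \<Rightarrow> (\<exists>\<sigma>. involutory_automorphism \<sigma> \<and> hermitian_form scale \<sigma> B) \<and> nondegenerate_form B \<and>
                       vector_space.dim scale (UNIV::'v set) \<in> {2 * \<omega> + 1, 2 * \<omega>}) \<and>
     (\<exists>U. singular t scale B Q U \<and> vector_space.dim scale U = \<omega>) \<and>
     (\<forall>U. singular t scale B Q U \<longrightarrow> vector_space.dim scale U \<le> \<omega>)"

definition pg_vertex :: "form_kind \<Rightarrow> ('a::field \<Rightarrow> 'v::ab_group_add \<Rightarrow> 'v) \<Rightarrow> ('v \<Rightarrow> 'v \<Rightarrow> 'a) \<Rightarrow> ('v \<Rightarrow> 'a) \<Rightarrow> nat \<Rightarrow> 'v set \<Rightarrow> bool" where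
  "pg_vertex t scale B Q k U \<longleftrightarrow> singular t scale B Q U \<and> vector_space.dim scale U = k"

definition pg_adj :: "form_kind \<Rightarrow> ('a::field \<Rightarrow> 'v::ab_group_add \<Rightarrow> 'v) \<Rightarrow> ('v \<Rightarrow> 'v \<Rightarrow> 'a) \<Rightarrow> ('v \<Rightarrow> 'a) \<Rightarrow> nat \<Rightarrow> 'v set \<Rightarrow> 'v set \<Rightarrow> bool" where
  "pg_adj t scale B Q k U W \<longleftrightarrow> pg_vertex t scale B Q k U \<and> pg_vertex t scale B Q k W \<and> U \<noteq> W \<and>
     singular t scale B Q (module.span scale (U \<union> W)) \<and>
     vector_space.dim scale (module.span scale (U \<union> W)) = k + 1"

definition pg_walk :: "form_kind \<Rightarrow> ('a::field \<Rightarrow> 'v::ab_group_add \<Rightarrow> 'v) \<Rightarrow> ('v \<Rightarrow> 'v \<Rightarrow> 'a) \<Rightarrow> ('v \<Rightarrow> 'a) \<Rightarrow> nat \<Rightarrow> 'v set list \<Rightarrow> 'v set \<Rightarrow> 'v set \<Rightarrow> bool" where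
  "pg_walk t scale B Q k P X Y \<longleftrightarrow> P \<noteq> [] \<and> hd P = X \<and> last P = Y \<and>
     (\<forall>U\<in>set P. pg_vertex t scale B Q k U) \<and>
     (\<forall>i. Suc i < length P \<longrightarrow> pg_adj t scale B Q k (P ! i) (P ! Suc i))"

definition pg_dist :: "form_kind \<Rightarrow> ('a::field \<Rightarrow> 'v::ab_group_add \<Rightarrow> 'v) \<Rightarrow> ('v \<Rightarrow> 'v \<Rightarrow> 'a) \<Rightarrow> ('v \<Rightarrow> 'a) \<Rightarrow> nat \<Rightarrow> 'v set \<Rightarrow> 'v set \<Rightarrow> nat" where
  "pg_dist t scale B Q k X Y = (LEAST n. \<exists>P. pg_walk t scale B Q k P X Y \<and> length P = Suc n)"

definition pg_geodesic :: "form_kind \<Rightarrow> ('a::field \<Rightarrow> 'v::ab_group_add \<Rightarrow> 'v) \<Rightarrow> ('v \<Rightarrow> 'v \<Rightarrow> 'a) \<Rightarrow> ('v \<Rightarrow> 'a) \<Rightarrow> nat \<Rightarrow> 'v set list \<Rightarrow> 'v set \<Rightarrow> 'v set \<Rightarrow> bool" where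
  "pg_geodesic t scale B Q k P X Y \<longleftrightarrow> pg_walk t scale B Q k P X Y \<and>
     length P = Suc (pg_dist t scale B Q k X Y)"

definition opposite :: "('v \<Rightarrow> 'v \<Rightarrow> 'a::zero) \<Rightarrow> 'v set \<Rightarrow> 'v set \<Rightarrow> bool" where
  "opposite B X Y \<longleftrightarrow> X \<noteq> Y \<and> perp B X \<inter> Y = X \<inter> Y"

end

theory Submission
  imports Defs
begin

locale fs = vector_space scale for scale :: "'a::field \<Rightarrow> 'v::ab_group_add \<Rightarrow> 'v" +
  fixes B :: "'v \<Rightarrow> 'v \<Rightarrow> 'a" and \<sigma> :: "'a \<Rightarrow> 'a" and sv :: "'v \<Rightarrow> bool"
  assumes findim: "\<exists>S. finite S \<and> span S = UNIV"
  and B_add1: "B (u + v) w = B u w + B v w"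
  and B_add2: "B u (v + w) = B u v + B u w"
  and B_scale1: "B (scale c u) v = c * B u v"
  and B_scale2: "B u (scale c v) = \<sigma> c * B u v"
  and \<sigma>_add: "\<sigma> (a + b) = \<sigma> a + \<sigma> b"
  and \<sigma>_mult: "\<sigma> (a * b) = \<sigma> a * \<sigma> b"
  and \<sigma>_inv: "\<sigma> (\<sigma> a) = a"
  and B_refl: "B u v = 0 \<longleftrightarrow> B v u = 0"
  and sv_add: "sv u \<Longrightarrow> sv v \<Longrightarrow> B u v = 0 \<Longrightarrow> sv (u + v)"
  and sv_scale: "sv u \<Longrightarrow> sv (scale c u)"
  and sv_B: "sv u \<Longrightarrow> B u u = 0"
  and rad: "(\<forall>u. B u v = 0) \<Longrightarrow> sv v \<Longrightarrow> v = 0"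
  and sv_fix: "sv x \<Longrightarrow> B x y \<noteq> 0 \<Longrightarrow> \<exists>c. sv (y + scale c x)"
begin

end

context fs begin

definition Bas where "Bas = (SOME S. finite S \<and> independent S \<and> span S = UNIV)"

lemma Bas: "finite Bas \<and> independent Bas \<and> span Bas = UNIV"
proof -
  obtain S where S: "finite S" "span S = UNIV" using findim by blast
  obtain T where T: "T \<subseteq> S" "independent T" "S \<subseteq> span T"
    using maximal_independent_subset[of S] by blast
  have "span S \<subseteq> span T" using span_mono[OF T(3)] by (simp add: span_span)
  hence "span T = UNIV" using S by auto
  moreover have "finite T" using T(1) S(1) by (rule finite_subset)
  ultimately have "\<exists>S. finite S \<and> independent S \<and> span S = UNIV" using T(2) by blast
  thus ?thesis unfolding Bas_def by (rule someI_ex)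
qed

sublocale fd: finite_dimensional_vector_space scale Bas
  by unfold_locales (simp_all add: Bas)

end

context fs begin

lemma B_zero1[simp]: "B 0 v = 0"
  using B_add1[of 0 0 v] by (metis add_0 add_cancel_right_right)
lemma B_zero2[simp]: "B u 0 = 0"
  using B_add2[of u 0 0] by (metis add_0 add_cancel_right_right)
lemma B_neg1: "B (- u) v = - B u v"
  using B_add1[of u "- u" v] by (simp add: add_eq_0_iff)
lemma B_neg2: "B u (- v) = - B u v"
  using B_add2[of u v "- v"] by (simp add: add_eq_0_iff)
lemma B_diff1: "B (u - v) w = B u w - B v w"
  using B_add1[of u "- v" w] B_neg1[of v w] by simp
lemma B_diff2: "B u (v - w) = B u v - B u w"
  using B_add2[of u v "- w"] B_neg2[of u w] by simp
lemma B_sum1: "finite A \<Longrightarrow> B (sum f A) v = (\<Sum>a\<in>A. B (f a) v)"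
  by (induction A rule: finite_induct) (auto simp: B_add1)

lemma \<sigma>_0[simp]: "\<sigma> 0 = 0"
  using \<sigma>_add[of 0 0] by (metis add_0 add_cancel_right_right)
lemma \<sigma>_1[simp]: "\<sigma> 1 = 1"
proof -
  have "\<sigma> 1 = \<sigma> 1 * \<sigma> 1" using \<sigma>_mult[of 1 1] by simp
  hence "\<sigma> 1 = 0 \<or> \<sigma> 1 = 1" by (metis mult_cancel_left1 mult_eq_0_iff)
  moreover have "\<sigma> 1 \<noteq> 0"
  proof
    assume "\<sigma> 1 = 0"
    hence "\<sigma> (\<sigma> 1) = 0" by simp
    thus False using \<sigma>_inv[of 1] by simp
  qed
  ultimately show ?thesis by blast
qed
lemma \<sigma>_eq0[simp]: "\<sigma> a = 0 \<longleftrightarrow> a = 0"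
  by (metis \<sigma>_0 \<sigma>_inv)
lemma \<sigma>_neg: "\<sigma> (- a) = - \<sigma> a"
  using \<sigma>_add[of a "- a"] by (simp add: add_eq_0_iff)

lemma subspace_lker: "subspace {u. B u v = 0}"
  unfolding subspace_def by (auto simp: B_add1 B_scale1)

lemma subspace_perp: "subspace (perp B S)"
  unfolding subspace_def perp_def by (auto simp: B_add2 B_scale2)

lemma perp_anti: "S \<subseteq> T \<Longrightarrow> perp B T \<subseteq> perp B S"
  unfolding perp_def by auto

lemma perp_span: "perp B (span S) = perp B S"
proof
  show "perp B (span S) \<subseteq> perp B S" by (rule perp_anti[OF span_superset])
  show "perp B S \<subseteq> perp B (span S)"
  proof
    fix v assume v: "v \<in> perp B S"
    have "span S \<subseteq> {u. B u v = 0}"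
      by (rule span_minimal) (use v in \<open>auto simp: perp_def subspace_lker\<close>)
    thus "v \<in> perp B (span S)" by (auto simp: perp_def)
  qed
qed

lemma lperp: "{x. \<forall>s\<in>S. B x s = 0} = perp B S"
  unfolding perp_def using B_refl by blast

lemma in_perp: "v \<in> perp B S \<longleftrightarrow> (\<forall>u\<in>S. B u v = 0)"
  by (simp add: perp_def)

lemma in_perp': "v \<in> perp B S \<longleftrightarrow> (\<forall>u\<in>S. B v u = 0)"
  using B_refl by (auto simp: perp_def)

lemma dim_sum_int:
  assumes U: "subspace U" and W: "subspace W"
  shows "dim (span (U \<union> W)) + dim (U \<inter> W) = dim U + dim W"
proof -
  obtain Bk where Bk: "finite Bk" "Bk \<subseteq> U \<inter> W" "independent Bk" "span Bk = U \<inter> W" "card Bk = dim (U \<inter> W)"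
    using fd.basis_subspace_exists[OF subspace_inter[OF U W]] by metis
  obtain Bw where Bw: "Bk \<subseteq> Bw" "Bw \<subseteq> W" "independent Bw" "W \<subseteq> span Bw"
    using maximal_independent_subset_extend[of Bk W] Bk by blast
  have fBw: "finite Bw" using fd.finiteI_independent[OF Bw(3)] .
  have cBw: "card Bw = dim W" using basis_card_eq_dim[OF Bw(2) Bw(4) Bw(3)] .
  define E where "E = Bw - Bk"
  have fE: "finite E" using fBw E_def by auto
  have cE: "card E = dim W - dim (U \<inter> W)"
    unfolding E_def using card_Diff_subset[OF Bk(1) Bw(1)] cBw Bk(5) by simp
  have spW: "span W = W" using W by simp
  have spU: "span U = U" using U by simp
  have key: "finite F \<Longrightarrow> F \<subseteq> E \<Longrightarrow> dim (U \<union> F) = dim U + card F" for F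
  proof (induction F rule: finite_induct)
    case empty then show ?case by simp
  next
    case (insert e F)
    have eE: "e \<in> E" and FE: "F \<subseteq> E" using insert.prems by auto
    have "e \<notin> span (U \<union> F)"
    proof
      assume "e \<in> span (U \<union> F)"
      then obtain u f where uf: "e = u + f" "u \<in> U" "f \<in> span F"
        using span_Un[of U F] spU by auto
      have fW: "f \<in> W" using uf(3) span_mono[of F W] FE Bw(2) spW unfolding E_def by auto
      have eW: "e \<in> W" using eE Bw(2) E_def by auto
      have "u = e - f" using uf by simp
      hence "u \<in> W" using eW fW W by (simp add: subspace_diff)
      hence "u \<in> span Bk" using uf(2) Bk(4) by simp
      hence "e \<in> span (Bk \<union> F)" using uf span_Un[of Bk F] by auto
      moreover have "Bk \<union> F \<subseteq> Bw - {e}" using FE eE insert.hyps(2) Bw(1) E_def by auto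
      ultimately have "e \<in> span (Bw - {e})" using span_mono by blast
      moreover have "e \<in> Bw" using eE E_def by auto
      ultimately have "dependent Bw" unfolding dependent_def by blast
      thus False using Bw(3) by simp
    qed
    hence "dim (insert e (U \<union> F)) = dim (U \<union> F) + 1" using fd.dim_insert by simp
    thus ?case using insert by simp
  qed
  have dUE: "dim (U \<union> E) = dim U + card E" using key[OF fE] by simp
  have "span (U \<union> W) = span (U \<union> E)"
  proof (rule span_eq[THEN iffD2], rule conjI)
    have "W \<subseteq> span (U \<union> E)"
    proof -
      have "Bw \<subseteq> U \<union> E" using Bk(2) E_def by auto
      hence "span Bw \<subseteq> span (U \<union> E)" by (rule span_mono)
      thus ?thesis using Bw(4) by auto
    qed
    thus "U \<union> W \<subseteq> span (U \<union> E)" using span_superset by blast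
    show "U \<union> E \<subseteq> span (U \<union> W)" using E_def Bw(2) span_superset by blast
  qed
  hence "dim (span (U \<union> W)) = dim U + card E" using dUE by simp
  moreover have "dim (U \<inter> W) \<le> dim W" by (rule fd.dim_subset) auto
  ultimately show ?thesis using cE by simp
qed

lemma dim_kernel:
  assumes U: "subspace U" and fadd: "\<And>x y. f (x + y) = f x + f y"
    and fsc: "\<And>c x. f (scale c x) = c * f x"
  shows "dim U \<le> dim (U \<inter> {x. f x = 0}) + 1"
proof (cases "\<forall>u\<in>U. f u = 0")
  case True
  hence "U \<inter> {x. f x = 0} = U" by auto
  thus ?thesis by simp
next
  case False
  then obtain u0 where u0: "u0 \<in> U" "f u0 \<noteq> 0" by auto
  have fdiff: "f (x - y) = f x - f y" for x y
    using fadd[of x "- y"] fsc[of "-1" y] by (simp add: scale_minus_left)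
  have "U \<subseteq> span (insert u0 (U \<inter> {x. f x = 0}))"
  proof
    fix u assume u: "u \<in> U"
    define c where "c = f u / f u0"
    have "u - scale c u0 \<in> U \<inter> {x. f x = 0}"
      using u u0 U by (auto simp: c_def fdiff fsc subspace_diff subspace_scale)
    hence "u - scale c u0 \<in> span (U \<inter> {x. f x = 0})" by (rule span_base)
    thus "u \<in> span (insert u0 (U \<inter> {x. f x = 0}))"
      using span_breakdown_eq by blast
  qed
  hence "dim U \<le> dim (insert u0 (U \<inter> {x. f x = 0}))" by (rule fd.dim_mono)
  also have "\<dots> \<le> dim (U \<inter> {x. f x = 0}) + 1" using fd.dim_insert by simp
  finally show ?thesis .
qed

lemma dim_perp_finite:
  assumes "finite S" "subspace U"
  shows "dim U \<le> dim (U \<inter> perp B S) + card S"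
  using assms(1)
proof (induction S rule: finite_induct)
  case empty
  have "U \<inter> perp B {} = U" by (auto simp: perp_def)
  thus ?case by simp
next
  case (insert s S)
  have sub: "subspace (U \<inter> perp B S)" using assms(2) subspace_perp by (rule subspace_inter)
  have "dim (U \<inter> perp B S) \<le> dim ((U \<inter> perp B S) \<inter> {x. B x s = 0}) + 1"
    by (rule dim_kernel[OF sub]) (auto simp: B_add1 B_scale1)
  moreover have "(U \<inter> perp B S) \<inter> {x. B x s = 0} = U \<inter> perp B (insert s S)"
    using in_perp' by auto
  ultimately show ?case using insert by simp
qed

lemma rank_half:
  assumes U: "subspace U" and M: "subspace M"
  shows "dim M + dim (U \<inter> perp B M) \<le> dim U + dim (M \<inter> perp B U)"
proof -
  define K where "K = U \<inter> perp B M"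
  have K: "subspace K" unfolding K_def using U subspace_perp by (rule subspace_inter)
  obtain Bk where Bk: "finite Bk" "Bk \<subseteq> K" "independent Bk" "span Bk = K" "card Bk = dim K"
    using fd.basis_subspace_exists[OF K] by metis
  obtain Bu where Bu: "Bk \<subseteq> Bu" "Bu \<subseteq> U" "independent Bu" "U \<subseteq> span Bu"
    using maximal_independent_subset_extend[of Bk U] Bk K_def by blast
  have fBu: "finite Bu" using fd.finiteI_independent[OF Bu(3)] .
  have cBu: "card Bu = dim U" using basis_card_eq_dim[OF Bu(2) Bu(4) Bu(3)] .
  define E where "E = Bu - Bk"
  have fE: "finite E" using fBu E_def by auto
  have cE: "card E = dim U - dim K"
    unfolding E_def using card_Diff_subset[OF Bk(1) Bu(1)] cBu Bk(5) by simp
  have "M \<inter> perp B E \<subseteq> M \<inter> perp B U"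
  proof
    fix m assume m: "m \<in> M \<inter> perp B E"
    have "m \<in> perp B Bu"
    proof (unfold in_perp, rule ballI)
      fix b assume b: "b \<in> Bu"
      show "B b m = 0"
      proof (cases "b \<in> Bk")
        case True
        hence "b \<in> perp B M" using Bk(2) K_def by auto
        hence "B m b = 0" using m by (auto simp: perp_def)
        thus ?thesis using B_refl by simp
      next
        case False
        thus ?thesis using b m E_def by (auto simp: perp_def)
      qed
    qed
    hence "m \<in> perp B (span Bu)" using perp_span by simp
    thus "m \<in> M \<inter> perp B U" using perp_anti[OF Bu(4)] m by auto
  qed
  hence "dim (M \<inter> perp B E) \<le> dim (M \<inter> perp B U)" by (rule fd.dim_subset)
  moreover have "dim M \<le> dim (M \<inter> perp B E) + card E" by (rule dim_perp_finite[OF fE M])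
  moreover have "dim K \<le> dim U" unfolding K_def by (rule fd.dim_subset) auto
  ultimately have "dim M + dim K \<le> dim U + dim (M \<inter> perp B U)" using cE by linarith
  thus ?thesis by (simp add: K_def)
qed

lemma rank:
  assumes U: "subspace U" and M: "subspace M"
  shows "dim M + dim (U \<inter> perp B M) = dim U + dim (M \<inter> perp B U)"
  using rank_half[OF U M] rank_half[OF M U] by linarith

definition Rad where "Rad = perp B UNIV"

lemma double_perp:
  assumes S: "subspace S"
  shows "perp B (perp B S) = span (S \<union> Rad)"
proof -
  have R: "subspace Rad" unfolding Rad_def by (rule subspace_perp)
  have P: "subspace (perp B S)" by (rule subspace_perp)
  have r1: "dim UNIV + dim (S \<inter> Rad) = dim S + dim (perp B S)"
    using rank[OF S subspace_UNIV] unfolding Rad_def by simp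
  have RP: "Rad \<subseteq> perp B S" unfolding Rad_def perp_def by auto
  have r2: "dim UNIV + dim Rad = dim (perp B S) + dim (perp B (perp B S))"
    using rank[OF P subspace_UNIV] RP unfolding Rad_def by (simp add: Int_absorb1)
  have g: "dim (span (S \<union> Rad)) + dim (S \<inter> Rad) = dim S + dim Rad"
    by (rule dim_sum_int[OF S R])
  have sub: "span (S \<union> Rad) \<subseteq> perp B (perp B S)"
  proof (rule span_minimal[OF _ subspace_perp])
    show "S \<union> Rad \<subseteq> perp B (perp B S)"
      using B_refl unfolding Rad_def perp_def by auto
  qed
  show ?thesis
    by (rule sym, rule fd.subspace_dim_equal[OF subspace_span subspace_perp sub]) (use r1 r2 g in linarith)
qed

end

locale fsw = fs scale B \<sigma> sv for scale :: "'a::field \<Rightarrow> 'v::ab_group_add \<Rightarrow> 'v" and B \<sigma> sv +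
  fixes t :: form_kind and Q :: "'v \<Rightarrow> 'a" and \<omega> k :: nat
  assumes sing_eq: "singular t scale B Q U \<longleftrightarrow> (subspace U \<and> (\<forall>u\<in>U. sv u) \<and> (\<forall>u\<in>U. \<forall>v\<in>U. B u v = 0))"
  and ex_max: "\<exists>U. singular t scale B Q U \<and> dim U = \<omega>"
  and max_sing: "singular t scale B Q U \<Longrightarrow> dim U \<le> \<omega>"
  and k1: "1 \<le> k" and k\<omega>: "k < \<omega>"
begin

abbreviation "sing \<equiv> singular t scale B Q"
abbreviation "vert \<equiv> pg_vertex t scale B Q k"
abbreviation "adj \<equiv> pg_adj t scale B Q k"
abbreviation "walk \<equiv> pg_walk t scale B Q k"
abbreviation "gdist \<equiv> pg_dist t scale B Q k"
definition "orth U W \<longleftrightarrow> (\<forall>u\<in>U. \<forall>w\<in>W. B u w = 0)"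

lemma orth_sym: "orth U W \<longleftrightarrow> orth W U"
  unfolding orth_def using B_refl by blast

lemma sing_sub: "sing U \<Longrightarrow> subspace W \<Longrightarrow> W \<subseteq> U \<Longrightarrow> sing W"
  unfolding sing_eq by blast

lemma sing_subspace: "sing U \<Longrightarrow> subspace U"
  unfolding sing_eq by blast

lemma sing_orth: "sing U \<Longrightarrow> orth U U"
  unfolding sing_eq orth_def by blast

lemma sing_sv: "sing U \<Longrightarrow> u \<in> U \<Longrightarrow> sv u"
  unfolding sing_eq by blast

lemma sing_sum:
  assumes U: "sing U" and W: "sing W" and o: "orth U W"
  shows "sing (span (U \<union> W))"
proof -
  have sU: "span U = U" and sW: "span W = W" using U W sing_eq by auto
  have el: "x \<in> span (U \<union> W) \<Longrightarrow> \<exists>u w. x = u + w \<and> u \<in> U \<and> w \<in> W" for x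
    using span_Un[of U W] sU sW by auto
  show ?thesis unfolding sing_eq
  proof (intro conjI ballI)
    show "subspace (span (U \<union> W))" by simp
  next
    fix x assume "x \<in> span (U \<union> W)"
    then obtain u w where x: "x = u + w" "u \<in> U" "w \<in> W" using el by blast
    show "sv x" unfolding x(1)
      by (rule sv_add) (use x U W o in \<open>auto simp: sing_eq orth_def\<close>)
  next
    fix x y assume "x \<in> span (U \<union> W)" "y \<in> span (U \<union> W)"
    then obtain u w u' w' where x: "x = u + w" "u \<in> U" "w \<in> W" and y: "y = u' + w'" "u' \<in> U" "w' \<in> W"
      using el by blast
    have "B u u' = 0" "B w w' = 0" "B u w' = 0" using x y U W o by (auto simp: sing_eq orth_def)
    moreover have "B w u' = 0" using o x y B_refl by (auto simp: orth_def)
    ultimately show "B x y = 0" unfolding x y by (simp add: B_add1 B_add2)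
  qed
qed

lemma sing_span1: "sv z \<Longrightarrow> sing (span {z})"
  unfolding sing_eq
proof (intro conjI ballI)
  assume z: "sv z"
  show "subspace (span {z})" by simp
  fix u assume "u \<in> span {z}"
  then obtain c where "u = scale c z" using span_singleton by auto
  thus "sv u" using sv_scale z by simp
next
  fix u v assume z: "sv z" and "u \<in> span {z}" "v \<in> span {z}"
  then obtain c d where "u = scale c z" "v = scale d z" using span_singleton by auto
  thus "B u v = 0" using sv_B[OF z] by (simp add: B_scale1 B_scale2)
qed

lemma sing_insert:
  assumes U: "sing U" and z: "sv z" and o: "z \<in> perp B U"
  shows "sing (span (insert z U))"
proof -
  have "orth U (span {z})"
  proof -
    have "span {z} \<subseteq> perp B U" using o by (simp add: span_minimal subspace_perp)
    thus ?thesis by (auto simp: orth_def perp_def)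
  qed
  hence "sing (span (U \<union> span {z}))" by (rule sing_sum[OF U sing_span1[OF z]])
  moreover have "span (U \<union> span {z}) = span (insert z U)"
  proof (rule span_eq[THEN iffD2], rule conjI)
    have "span {z} \<subseteq> span (insert z U)" by (rule span_mono) auto
    thus "U \<union> span {z} \<subseteq> span (insert z U)" using span_superset by blast
    show "insert z U \<subseteq> span (U \<union> span {z})"
      using span_superset[of "U \<union> span {z}"] span_superset[of "{z}"] by blast
  qed
  ultimately show ?thesis by simp
qed

lemma dim_insert_notin: "subspace H \<Longrightarrow> z \<notin> H \<Longrightarrow> dim (span (insert z H)) = dim H + 1"
proof -
  assume H: "subspace H" "z \<notin> H"
  have "span H = H" using H(1) by (rule span_eq_iff[THEN iffD2])
  hence "z \<notin> span H" using H(2) by metis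
  thus ?thesis using fd.dim_insert[of z H] by simp
qed

lemma adj_sym: "adj U W \<Longrightarrow> adj W U"
  unfolding pg_adj_def by (auto simp: sup_commute)

lemma adj_vert: "adj U W \<Longrightarrow> vert U \<and> vert W"
  unfolding pg_adj_def by auto

lemma vert_sub: "vert U \<Longrightarrow> subspace U"
  unfolding pg_vertex_def using sing_subspace by auto

lemma adj_char:
  assumes "adj U W"
  shows "dim (U \<inter> W) + 1 = k \<and> orth U W"
proof -
  have U: "sing U" "dim U = k" and W: "sing W" "dim W = k"
    and S: "sing (span (U \<union> W))" "dim (span (U \<union> W)) = k + 1"
    using assms unfolding pg_adj_def pg_vertex_def by auto
  have "dim (span (U \<union> W)) + dim (U \<inter> W) = dim U + dim W"
    using dim_sum_int U W sing_subspace by blast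
  hence "dim (U \<inter> W) + 1 = k" using U W S by simp
  moreover have "orth U W" using S(1) span_superset[of "U \<union> W"] unfolding sing_eq orth_def by blast
  ultimately show ?thesis by blast
qed

lemma adj_intro:
  assumes U: "vert U" and W: "vert W" and o: "orth U W" and d: "dim (U \<inter> W) + 1 = k"
  shows "adj U W"
proof -
  have U': "sing U" "dim U = k" and W': "sing W" "dim W = k" using U W unfolding pg_vertex_def by auto
  have "dim (span (U \<union> W)) + dim (U \<inter> W) = dim U + dim W"
    using dim_sum_int U' W' sing_subspace by blast
  hence "dim (span (U \<union> W)) = k + 1" using U' W' d by simp
  moreover have "U \<noteq> W" using d U'(2) by auto
  moreover have "sing (span (U \<union> W))" by (rule sing_sum[OF U'(1) W'(1) o])
  ultimately show ?thesis using U W unfolding pg_adj_def by blast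
qed

lemma one_step:
  assumes a: "adj U U'" and Z: "subspace Z"
  shows "dim (U' \<inter> Z) \<le> dim (U \<inter> Z) + 1"
proof -
  have U: "subspace U" "dim U = k" and U': "subspace U'" "dim U' = k"
    using a unfolding pg_adj_def pg_vertex_def using sing_subspace by auto
  have D: "dim (U \<inter> U') + 1 = k" using adj_char[OF a] by simp
  let ?A = "U' \<inter> Z" and ?D = "U \<inter> U'"
  have sA: "subspace ?A" using U' Z by (simp add: subspace_inter)
  have sD: "subspace ?D" using U U' by (simp add: subspace_inter)
  have g: "dim (span (?A \<union> ?D)) + dim (?A \<inter> ?D) = dim ?A + dim ?D" by (rule dim_sum_int[OF sA sD])
  have "span (?A \<union> ?D) \<subseteq> U'" using U' by (intro span_minimal) auto
  hence "dim (span (?A \<union> ?D)) \<le> k" using fd.dim_subset U' by metis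
  moreover have "dim (?A \<inter> ?D) \<le> dim (U \<inter> Z)" by (rule fd.dim_subset) auto
  ultimately show ?thesis using g D by linarith
qed

lemma walk_adj: "walk P X Y \<Longrightarrow> Suc i < length P \<Longrightarrow> adj (P ! i) (P ! Suc i)"
  unfolding pg_walk_def by blast

lemma walk_vert: "walk P X Y \<Longrightarrow> i < length P \<Longrightarrow> vert (P ! i)"
  unfolding pg_walk_def by auto

lemma walk_ends: "walk P X Y \<Longrightarrow> P ! 0 = X \<and> P ! (length P - 1) = Y \<and> P \<noteq> []"
proof -
  assume w: "walk P X Y"
  hence P: "P \<noteq> []" "hd P = X" "last P = Y" unfolding pg_walk_def by auto
  have "P ! 0 = X" using P by (simp add: hd_conv_nth)
  moreover have "P ! (length P - 1) = Y" using P by (simp add: last_conv_nth)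
  ultimately show ?thesis using P by simp
qed

lemma walk_bound:
  assumes w: "walk P X Y" and Z: "subspace Z" and ij: "i \<le> j" "j < length P"
  shows "dim (P ! j \<inter> Z) \<le> dim (P ! i \<inter> Z) + (j - i) \<and> dim (P ! i \<inter> Z) \<le> dim (P ! j \<inter> Z) + (j - i)"
  using ij
proof (induction j)
  case 0 thus ?case by simp
next
  case (Suc j)
  show ?case
  proof (cases "i = Suc j")
    case True thus ?thesis by simp
  next
    case False
    hence ij': "i \<le> j" "j < length P" using Suc.prems by auto
    have a: "adj (P ! j) (P ! Suc j)" using walk_adj[OF w] Suc.prems by simp
    have "dim (P ! Suc j \<inter> Z) \<le> dim (P ! j \<inter> Z) + 1" by (rule one_step[OF a Z])
    moreover have "dim (P ! j \<inter> Z) \<le> dim (P ! Suc j \<inter> Z) + 1" by (rule one_step[OF adj_sym[OF a] Z])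
    ultimately show ?thesis using Suc.IH[OF ij'] ij' by linarith
  qed
qed

lemma walk_cons:
  assumes a: "adj X X'" and w: "walk P X' Y"
  shows "walk (X # P) X Y"
proof -
  have P: "P \<noteq> []" "P ! 0 = X'" using walk_ends[OF w] by auto
  show ?thesis unfolding pg_walk_def
  proof (intro conjI allI impI ballI)
    show "X # P \<noteq> []" "hd (X # P) = X" by auto
    show "last (X # P) = Y" using w P unfolding pg_walk_def by simp
    fix U assume "U \<in> set (X # P)"
    thus "vert U" using adj_vert[OF a] w unfolding pg_walk_def by auto
  next
    fix i assume i: "Suc i < length (X # P)"
    show "adj ((X # P) ! i) ((X # P) ! Suc i)"
    proof (cases i)
      case 0 thus ?thesis using a P by simp
    next
      case (Suc j) thus ?thesis using walk_adj[OF w, of j] i by simp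
    qed
  qed
qed

lemma walk_single: "vert X \<Longrightarrow> walk [X] X X"
  unfolding pg_walk_def by auto

lemma walk_drop:
  assumes w: "walk P X Y" and i: "i < length P"
  shows "walk (drop i P) (P ! i) Y"
  unfolding pg_walk_def
proof (intro conjI allI impI ballI)
  show "drop i P \<noteq> []" using i by simp
  show "hd (drop i P) = P ! i" using i by (simp add: hd_drop_conv_nth)
  show "last (drop i P) = Y" using w i unfolding pg_walk_def by (simp add: last_drop)
  fix U assume "U \<in> set (drop i P)"
  thus "vert U" using w set_drop_subset unfolding pg_walk_def by fastforce
next
  fix j assume "Suc j < length (drop i P)"
  thus "adj (drop i P ! j) (drop i P ! Suc j)" using walk_adj[OF w, of "i + j"] by simp
qed

lemma walk_take:
  assumes w: "walk P X Y" and i: "i < length P"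
  shows "walk (take (Suc i) P) X (P ! i)"
  unfolding pg_walk_def
proof (intro conjI allI impI ballI)
  show "take (Suc i) P \<noteq> []" using i walk_ends[OF w] by simp
  show "hd (take (Suc i) P) = X" using w i unfolding pg_walk_def by simp
  show "last (take (Suc i) P) = P ! i" using i by (simp add: take_Suc_conv_app_nth)
  fix U assume "U \<in> set (take (Suc i) P)"
  thus "vert U" using w set_take_subset unfolding pg_walk_def by fastforce
next
  fix j assume "Suc j < length (take (Suc i) P)"
  thus "adj (take (Suc i) P ! j) (take (Suc i) P ! Suc j)" using walk_adj[OF w, of j] by simp
qed

lemma dist_le:
  assumes w: "walk P X Y" shows "gdist X Y \<le> length P - 1"
proof -
  have "length P = Suc (length P - 1)" using walk_ends[OF w] by simp
  hence "\<exists>P'. walk P' X Y \<and> length P' = Suc (length P - 1)" using w by blast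
  thus ?thesis unfolding pg_dist_def by (rule Least_le)
qed

lemma dist_exact:
  assumes w: "walk P X Y" "length P = Suc n" and lb: "\<And>P'. walk P' X Y \<Longrightarrow> Suc n \<le> length P'"
  shows "gdist X Y = n"
  unfolding pg_dist_def
proof (rule Least_equality)
  show "\<exists>P. walk P X Y \<and> length P = Suc n" using w by blast
  fix m assume "\<exists>P. walk P X Y \<and> length P = Suc m"
  then obtain P' where "walk P' X Y" "length P' = Suc m" by blast
  thus "n \<le> m" using lb by fastforce
qed

lemma walk_lower:
  assumes w: "walk P X Y"
  shows "k \<le> dim (X \<inter> Y) + (length P - 1)"
proof -
  have Y: "vert Y" and X: "vert X" using w walk_vert walk_ends by (metis diff_less length_greater_0_conv less_one not_gr_zero)+
  have "dim (P ! (length P - 1) \<inter> Y) \<le> dim (P ! 0 \<inter> Y) + (length P - 1 - 0)"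
    using walk_bound[OF w vert_sub[OF Y], of 0 "length P - 1"] walk_ends[OF w] by auto
  thus ?thesis using walk_ends[OF w] Y unfolding pg_vertex_def by simp
qed

end

context fsw begin

lemma vert_dim: "vert U \<Longrightarrow> dim U = k" unfolding pg_vertex_def by simp
lemma vert_sing: "vert U \<Longrightarrow> sing U" unfolding pg_vertex_def by simp

lemma sub_eq_dim: "subspace S \<Longrightarrow> subspace T \<Longrightarrow> S \<subseteq> T \<Longrightarrow> dim T \<le> dim S \<Longrightarrow> S = T"
  by (rule fd.subspace_dim_equal)

lemma spanS: "subspace S \<Longrightarrow> span S = S" by (rule span_eq_iff[THEN iffD2])

lemma dim_le: "S \<subseteq> T \<Longrightarrow> dim S \<le> dim T" by (rule fd.dim_subset)

lemma geo_struct: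
  assumes w: "walk P X Y" and n: "length P = Suc n" and m: "n + dim (X \<inter> Y) = k" and i: "i \<le> n"
  shows "X \<inter> Y \<subseteq> P ! i \<and> dim (P ! i \<inter> X) + i = k \<and> dim (P ! i \<inter> Y) + (n - i) = k \<and>
         P ! i = span ((P ! i \<inter> X) \<union> (P ! i \<inter> Y))"
proof -
  have e: "P ! 0 = X" "P ! n = Y" using walk_ends[OF w] n by auto
  have "vert (P ! 0)" "vert (P ! n)" "vert (P ! i)" using walk_vert[OF w] n i by auto
  hence X: "vert X" and Y: "vert Y" and Pi: "vert (P ! i)" using e by auto
  have sX: "subspace X" and sY: "subspace Y" and sP: "subspace (P ! i)" using X Y Pi vert_sub by auto
  have dX: "dim X = k" "dim Y = k" "dim (P ! i) = k" using X Y Pi vert_dim by auto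
  have a1: "dim (P ! 0 \<inter> X) \<le> dim (P ! i \<inter> X) + i"
    using walk_bound[OF w sX, of 0 i] i n by simp
  have a2: "dim (P ! i \<inter> X) \<le> dim (P ! n \<inter> X) + (n - i)"
    using walk_bound[OF w sX, of i n] i n by simp
  have b1: "dim (P ! i \<inter> Y) \<le> dim (P ! 0 \<inter> Y) + i"
    using walk_bound[OF w sY, of 0 i] i n by simp
  have b2: "dim (P ! n \<inter> Y) \<le> dim (P ! i \<inter> Y) + (n - i)"
    using walk_bound[OF w sY, of i n] i n by simp
  have YX: "Y \<inter> X = X \<inter> Y" by auto
  have A: "dim (P ! i \<inter> X) + i = k" using a1 a2 e dX YX m i by simp
  have C: "dim (P ! i \<inter> Y) + (n - i) = k" using b1 b2 e dX m i by simp
  let ?A = "P ! i \<inter> X" and ?C = "P ! i \<inter> Y"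
  have sA: "subspace ?A" "subspace ?C" using sP sX sY by (auto simp: subspace_inter)
  have g: "dim (span (?A \<union> ?C)) + dim (?A \<inter> ?C) = dim ?A + dim ?C" by (rule dim_sum_int[OF sA])
  have spP: "span (?A \<union> ?C) \<subseteq> P ! i" using sP by (intro span_minimal) auto
  hence g1: "dim (span (?A \<union> ?C)) \<le> k" using dim_le dX by metis
  have AC: "?A \<inter> ?C \<subseteq> X \<inter> Y" by auto
  have g2: "dim (?A \<inter> ?C) \<le> dim (X \<inter> Y)" using dim_le[OF AC] .
  have "dim (X \<inter> Y) \<le> dim (?A \<inter> ?C)" using g g1 A C m i by linarith
  hence "?A \<inter> ?C = X \<inter> Y"
    by (intro sub_eq_dim[OF _ _ AC]) (use sA sX sY in \<open>auto simp: subspace_inter\<close>)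
  hence "X \<inter> Y \<subseteq> P ! i" by auto
  moreover have "span (?A \<union> ?C) = P ! i"
    by (rule sub_eq_dim[OF subspace_span sP spP]) (use g g2 A C m i dX in linarith)
  ultimately show ?thesis using A C by simp
qed

lemma opp_sym:
  assumes X: "vert X" and Y: "vert Y" and o: "opposite B X Y"
  shows "X \<inter> perp B Y = X \<inter> Y"
proof -
  have sX: "subspace X" and sY: "subspace Y" using X Y vert_sub by auto
  have r: "dim Y + dim (X \<inter> perp B Y) = dim X + dim (Y \<inter> perp B X)" by (rule rank[OF sX sY])
  have "Y \<inter> perp B X = X \<inter> Y" using o unfolding opposite_def by auto
  hence d: "dim (X \<inter> perp B Y) = dim (X \<inter> Y)" using r X Y vert_dim by simp
  have sub: "X \<inter> Y \<subseteq> X \<inter> perp B Y"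
    using sing_orth[OF vert_sing[OF Y]] unfolding orth_def perp_def by auto
  show ?thesis
    by (rule sym, rule sub_eq_dim[OF _ _ sub]) (use d sX sY subspace_perp in \<open>auto simp: subspace_inter\<close>)
qed

lemma opp_nb:
  assumes o: "opposite B X Y" and a: "adj X X1"
  shows "X1 \<inter> Y \<subseteq> X \<inter> Y"
proof
  fix v assume v: "v \<in> X1 \<inter> Y"
  have "orth X X1" using adj_char[OF a] by simp
  hence "v \<in> perp B X" using v unfolding orth_def perp_def by auto
  thus "v \<in> X \<inter> Y" using o v unfolding opposite_def by blast
qed

lemma notopp:
  assumes X: "vert X" and Y: "vert Y" and XY: "X \<noteq> Y" and no: "\<not> opposite B X Y"
  shows "\<exists>y\<in>Y. y \<in> perp B X \<and> y \<notin> X"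
proof -
  have "X \<inter> Y \<subseteq> perp B X \<inter> Y"
    using sing_orth[OF vert_sing[OF X]] unfolding orth_def perp_def by auto
  moreover have "perp B X \<inter> Y \<noteq> X \<inter> Y" using no XY unfolding opposite_def by auto
  ultimately show ?thesis by auto
qed

lemma intermediate:
  assumes S: "subspace S" and T: "subspace T" and ST: "S \<subseteq> T" and d: "dim S \<le> d" "d \<le> dim T"
  shows "\<exists>H. subspace H \<and> S \<subseteq> H \<and> H \<subseteq> T \<and> dim H = d"
proof -
  have "j \<le> dim T - dim S \<Longrightarrow> \<exists>H. subspace H \<and> S \<subseteq> H \<and> H \<subseteq> T \<and> dim H = dim S + j" for j
  proof (induction j)
    case 0 thus ?case using S ST by auto
  next
    case (Suc j)
    then obtain H where H: "subspace H" "S \<subseteq> H" "H \<subseteq> T" "dim H = dim S + j" by auto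
    have "H \<noteq> T" using H Suc.prems by auto
    then obtain z where z: "z \<in> T" "z \<notin> H" using H(3) by auto
    have "dim (span (insert z H)) = dim H + 1" by (rule dim_insert_notin[OF H(1) z(2)])
    moreover have "span (insert z H) \<subseteq> T" using T z H(3) by (intro span_minimal) auto
    moreover have "S \<subseteq> span (insert z H)" using H(2) span_superset by blast
    ultimately show ?case using H(4) by (intro exI[of _ "span (insert z H)"]) auto
  qed
  from this[of "d - dim S"] d show ?thesis by auto
qed

lemma perp_insert_span: "v \<in> perp B (span (insert y H)) \<longleftrightarrow> B y v = 0 \<and> v \<in> perp B H"
  by (simp only: perp_span) (auto simp: perp_def)

lemma path_nonopp:
  "vert X \<Longrightarrow> vert Y \<Longrightarrow> X \<noteq> Y \<Longrightarrow> \<not> opposite B X Y \<Longrightarrow>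
   \<exists>P. walk P X Y \<and> length P = Suc (k - dim (X \<inter> Y))"
proof (induction "k - dim (X \<inter> Y)" arbitrary: X rule: less_induct)
  case less
  note X = less.prems(1) and Y = less.prems(2) and XY = less.prems(3) and no = less.prems(4)
  define W where "W = X \<inter> Y"
  have sX: "subspace X" and sY: "subspace Y" using X Y vert_sub by auto
  have sW: "subspace W" unfolding W_def using sX sY by (simp add: subspace_inter)
  have dX: "dim X = k" "dim Y = k" using X Y vert_dim by auto
  have sgX: "sing X" and sgY: "sing Y" using X Y vert_sing by auto
  obtain y where y: "y \<in> Y" "y \<in> perp B X" "y \<notin> X" using notopp[OF X Y XY no] by blast
  have dWk: "dim W < k"
  proof (rule ccontr)
    assume "\<not> dim W < k"
    hence "W = X" "W = Y" using dX sW sX sY unfolding W_def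
      by (metis inf_le1 inf_le2 not_less sub_eq_dim)+
    thus False using XY by simp
  qed
  have yW: "y \<notin> W" using y W_def by auto
  have dyW: "dim (span (insert y W)) = dim W + 1" by (rule dim_insert_notin[OF sW yW])
  obtain H where H: "subspace H" "W \<subseteq> H" "H \<subseteq> X" "dim H + 1 = k"
    and H2: "k - dim W \<ge> 2 \<Longrightarrow> \<exists>y2\<in>Y. y2 \<notin> span (insert y W) \<and> H \<subseteq> perp B {y2}"
  proof (cases "k - dim W \<ge> 2")
    case False
    hence "dim W + 1 = k" using dWk by linarith
    thus ?thesis using that[of W] sW W_def by auto
  next
    case True
    have "\<not> Y \<subseteq> span (insert y W)"
    proof
      assume "Y \<subseteq> span (insert y W)"
      hence "dim Y \<le> dim (span (insert y W))" using dim_le by blast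
      thus False using dyW dX True by linarith
    qed
    then obtain y2 where y2: "y2 \<in> Y" "y2 \<notin> span (insert y W)" by auto
    let ?T = "X \<inter> perp B {y2}"
    have sT: "subspace ?T" using sX subspace_perp by (simp add: subspace_inter)
    have dT: "dim X \<le> dim ?T + 1" using dim_perp_finite[of "{y2}" X] sX by simp
    have WT: "W \<subseteq> ?T" using sgY y2(1) unfolding W_def sing_eq perp_def by auto
    have "dim W \<le> k - 1" "k - 1 \<le> dim ?T" using dWk dT dX by linarith+
    then obtain H where "subspace H" "W \<subseteq> H" "H \<subseteq> ?T" "dim H = k - 1"
      using intermediate[OF sW sT WT] by blast
    thus ?thesis using that[of H] y2 True k1 by auto
  qed
  define X' where "X' = span (insert y H)"
  have yH: "y \<notin> H" using H(3) y(3) by auto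
  have yperpH: "y \<in> perp B H" using perp_anti[OF H(3)] y(2) by auto
  have sgH: "sing H" using sing_sub[OF sgX H(1) H(3)] .
  have sgX': "sing X'" unfolding X'_def by (rule sing_insert[OF sgH sing_sv[OF sgY y(1)] yperpH])
  have dX': "dim X' = k" unfolding X'_def using dim_insert_notin[OF H(1) yH] H(4) by simp
  have vX': "vert X'" using sgX' dX' unfolding pg_vertex_def by simp
  have sX': "subspace X'" unfolding X'_def by simp
  have X'perp: "X' \<subseteq> perp B X"
  proof -
    have "H \<subseteq> perp B X" using H(3) sgX unfolding sing_eq perp_def by auto
    thus ?thesis unfolding X'_def using y(2) by (intro span_minimal subspace_perp) auto
  qed
  have oXX': "orth X X'" using X'perp unfolding orth_def perp_def by auto
  have HX': "H \<subseteq> X'" unfolding X'_def using span_superset by blast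
  have yX': "y \<in> X'" unfolding X'_def using span_superset by blast
  have dXX': "dim (X \<inter> X') + 1 = k"
  proof -
    have "dim H \<le> dim (X \<inter> X')" using dim_le H(3) HX' by (metis le_inf_iff)
    moreover have "dim (X \<inter> X') < k"
    proof (rule ccontr)
      assume "\<not> dim (X \<inter> X') < k"
      hence "X \<inter> X' = X" "X \<inter> X' = X'" using dX dX' sX sX' 
        by (metis inf_le1 inf_le2 not_less sub_eq_dim subspace_inter)+
      thus False using yX' y(3) by auto
    qed
    ultimately show ?thesis using H(4) by linarith
  qed
  have aXX': "adj X X'" by (rule adj_intro[OF X vX' oXX' dXX'])
  have dX'Y: "dim (X' \<inter> Y) = dim W + 1"
  proof -
    have "span (insert y W) \<subseteq> X' \<inter> Y"
      using HX' H(2) yX' y(1) sX' sY unfolding W_def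
      by (intro span_minimal) (auto simp: subspace_inter)
    hence "dim W + 1 \<le> dim (X' \<inter> Y)" using dyW dim_le by metis
    moreover have "dim (X' \<inter> Y) \<le> dim (X \<inter> Y) + 1" by (rule one_step[OF aXX' sY])
    ultimately show ?thesis unfolding W_def by simp
  qed
  show ?case
  proof (cases "k - dim W \<ge> 2")
    case False
    hence "dim (X' \<inter> Y) = k" using dX'Y dWk by linarith
    hence "X' \<inter> Y = X'" "X' \<inter> Y = Y" using dX dX' sX' sY
      by (metis inf_le1 inf_le2 order_refl sub_eq_dim subspace_inter)+
    hence "X' = Y" by simp
    hence "walk [X, Y] X Y" using walk_cons[OF aXX' walk_single[OF vX']] by simp
    moreover have "k - dim (X \<inter> Y) = 1" using False dWk W_def by simp
    ultimately show ?thesis by (intro exI[of _ "[X, Y]"]) simp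
  next
    case True
    then obtain y2 where y2: "y2 \<in> Y" "y2 \<notin> span (insert y W)" "H \<subseteq> perp B {y2}" using H2 by blast
    have y2X': "y2 \<in> perp B X'"
      unfolding X'_def perp_insert_span
    proof
      show "B y y2 = 0" using sgY y y2 unfolding sing_eq by auto
      show "y2 \<in> perp B H" using y2(3) B_refl unfolding perp_def by auto
    qed
    have y2nX': "y2 \<notin> X'"
    proof
      assume "y2 \<in> X'"
      then obtain c where c: "y2 - scale c y \<in> span H" unfolding X'_def using span_breakdown_eq by blast
      hence "y2 - scale c y \<in> H" using spanS[OF H(1)] by simp
      moreover have "y2 - scale c y \<in> Y" using y2(1) y(1) sY by (simp add: subspace_diff subspace_scale)
      ultimately have "y2 - scale c y \<in> W" using H(3) W_def by auto
      hence "y2 - scale c y \<in> span W" using span_superset by blast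
      hence "y2 \<in> span (insert y W)" using span_breakdown_eq by blast
      thus False using y2(2) by simp
    qed
    have X'Y: "X' \<noteq> Y" using y2nX' y2(1) by auto
    have no': "\<not> opposite B X' Y" using y2X' y2nX' y2(1) unfolding opposite_def by auto
    have lt: "k - dim (X' \<inter> Y) < k - dim (X \<inter> Y)" using dX'Y dWk W_def by simp
    obtain P' where P': "walk P' X' Y" "length P' = Suc (k - dim (X' \<inter> Y))"
      using less.hyps[OF lt vX' Y X'Y no'] by blast
    have "walk (X # P') X Y" by (rule walk_cons[OF aXX' P'(1)])
    moreover have "length (X # P') = Suc (k - dim (X \<inter> Y))" using P'(2) dX'Y dWk W_def by simp
    ultimately show ?thesis by blast
  qed
qed

end

context fsw begin

lemma exists_sv_perp:
  assumes U: "sing U" and d: "dim U < \<omega>"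
  shows "\<exists>z. sv z \<and> z \<in> perp B U \<and> z \<notin> U"
proof (rule ccontr)
  assume no: "\<not> ?thesis"
  obtain M where M: "sing M" "dim M = \<omega>" using ex_max by blast
  have sU: "subspace U" and sM: "subspace M" using U M sing_subspace by auto
  have r: "dim M + dim (U \<inter> perp B M) = dim U + dim (M \<inter> perp B U)" by (rule rank[OF sU sM])
  have e1: "M \<inter> perp B U = M \<inter> U"
  proof
    show "M \<inter> perp B U \<subseteq> M \<inter> U"
    proof
      fix z assume z: "z \<in> M \<inter> perp B U"
      have "sv z" using sing_sv[OF M(1)] z by blast
      hence "z \<in> U" using no z by blast
      thus "z \<in> M \<inter> U" using z by blast
    qed
    show "M \<inter> U \<subseteq> M \<inter> perp B U" using U unfolding sing_eq perp_def by auto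
  qed
  have e2: "U \<inter> perp B M = U \<inter> M"
  proof
    let ?K = "U \<inter> perp B M"
    have sK: "sing ?K" by (rule sing_sub[OF U subspace_inter[OF sU subspace_perp]]) auto
    have oMK: "orth M ?K" unfolding orth_def perp_def by auto
    have sMK: "sing (span (M \<union> ?K))" by (rule sing_sum[OF M(1) sK oMK])
    have "M \<subseteq> span (M \<union> ?K)" using span_superset by blast
    moreover have "dim (span (M \<union> ?K)) \<le> dim M" using max_sing[OF sMK] M(2) by simp
    ultimately have "M = span (M \<union> ?K)" by (intro sub_eq_dim[OF sM subspace_span])
    hence eqM: "span (M \<union> ?K) = M" by (rule sym)
    have "?K \<subseteq> span (M \<union> ?K)" using span_superset[of "M \<union> ?K"] by blast
    hence "?K \<subseteq> M" unfolding eqM .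
    thus "?K \<subseteq> U \<inter> M" by auto
    show "U \<inter> M \<subseteq> ?K" using M(1) unfolding sing_eq perp_def by auto
  qed
  have "M \<inter> U = U \<inter> M" by auto
  hence "dim M = dim U" using r e1 e2 by simp
  thus False using d M(2) by simp
qed

lemma path_opp:
  assumes X: "vert X" and Y: "vert Y" and o: "opposite B X Y"
  shows "\<exists>P. walk P X Y \<and> length P = Suc (Suc (k - dim (X \<inter> Y)))"
proof -
  have sX: "subspace X" and sY: "subspace Y" using X Y vert_sub by auto
  have dX: "dim X = k" "dim Y = k" using X Y vert_dim by auto
  have sgX: "sing X" and sgY: "sing Y" using X Y vert_sing by auto
  have XY: "X \<noteq> Y" using o unfolding opposite_def by auto
  have "\<not> Y \<subseteq> X"
  proof
    assume "Y \<subseteq> X" hence "Y = X" using sY sX dX sub_eq_dim by simp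
    thus False using XY by simp
  qed
  then obtain y where y: "y \<in> Y" "y \<notin> X" by auto
  have ynp: "y \<notin> perp B X" using o y unfolding opposite_def by blast
  then obtain x where x: "x \<in> X" "B x y \<noteq> 0" unfolding perp_def by auto
  define H where "H = X \<inter> perp B {y}"
  have sH: "subspace H" unfolding H_def using sX subspace_perp by (simp add: subspace_inter)
  have HX: "H \<subseteq> X" unfolding H_def by auto
  have xH: "x \<notin> H" using x B_refl unfolding H_def perp_def by auto
  have dH: "dim H + 1 = k"
  proof -
    have "dim X \<le> dim H + 1" using dim_perp_finite[of "{y}" X] sX unfolding H_def by simp
    moreover have "dim H < k"
    proof (rule ccontr)
      assume "\<not> dim H < k"
      hence "H = X" using sH sX HX dX sub_eq_dim by (metis not_less)
      thus False using xH x by simp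
    qed
    ultimately show ?thesis using dX by linarith
  qed
  have WH: "X \<inter> Y \<subseteq> H" using sgY y(1) unfolding H_def sing_eq perp_def by auto
  have sgH: "sing H" by (rule sing_sub[OF sgX sH HX])
  have yH: "y \<in> perp B H" unfolding H_def perp_def using B_refl by auto
  define U where "U = span (insert y H)"
  have sgU: "sing U" unfolding U_def by (rule sing_insert[OF sgH sing_sv[OF sgY y(1)] yH])
  have yHn: "y \<notin> H" using y(2) HX by auto
  have dU: "dim U = k" unfolding U_def using dim_insert_notin[OF sH yHn] dH by simp
  obtain z where z: "sv z" "z \<in> perp B U" "z \<notin> U" using exists_sv_perp[OF sgU] dU k\<omega> by auto
  have sU: "subspace U" unfolding U_def by simp
  have yU: "y \<in> U" and HU: "H \<subseteq> U" unfolding U_def using span_superset[of "insert y H"] by auto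
  define c where "c = \<sigma> (- B x z / B x y)"
  define z' where "z' = z + scale c y"
  have Bzy: "B z y = 0" using z(2) yU B_refl unfolding perp_def by auto
  have svz': "sv z'" unfolding z'_def
    by (rule sv_add[OF z(1) sv_scale[OF sing_sv[OF sgY y(1)]]]) (simp add: B_scale2 Bzy)
  have Bxz': "B x z' = 0" unfolding z'_def c_def using x(2) by (simp add: B_add2 B_scale2 \<sigma>_inv)
  have Byz': "B y z' = 0"
    unfolding z'_def using z(2) yU sv_B[OF sing_sv[OF sgY y(1)]] by (simp add: B_add2 B_scale2 perp_def)
  have Hz': "z' \<in> perp B H"
  proof -
    have "z \<in> perp B H" using perp_anti[OF HU] z(2) by auto
    moreover have "scale c y \<in> perp B H" using yH subspace_perp by (simp add: subspace_scale)
    ultimately show ?thesis unfolding z'_def using subspace_perp by (simp add: subspace_add)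
  qed
  have Xspan: "X = span (insert x H)"
  proof -
    have "span (insert x H) \<subseteq> X" using x(1) HX sX by (intro span_minimal) auto
    moreover have "dim (span (insert x H)) = k" using dim_insert_notin[OF sH xH] dH by simp
    ultimately show ?thesis using sX dX by (metis order_refl sub_eq_dim subspace_span)
  qed
  have z'X: "z' \<in> perp B X" unfolding Xspan perp_insert_span using Bxz' Hz' by simp
  have z'nU: "z' \<notin> U"
  proof
    assume "z' \<in> U"
    hence "z' - scale c y \<in> U" using yU sU by (simp add: subspace_diff subspace_scale)
    thus False using z(3) unfolding z'_def by simp
  qed
  have z'nX: "z' \<notin> X"
  proof
    assume "z' \<in> X"
    hence "z' \<in> H" using Byz' unfolding H_def perp_def by auto
    thus False using z'nU HU by auto
  qed
  hence z'nH: "z' \<notin> H" using HX by auto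
  define X0 where "X0 = span (insert z' H)"
  have sgX0: "sing X0" unfolding X0_def by (rule sing_insert[OF sgH svz' Hz'])
  have dX0: "dim X0 = k" unfolding X0_def using dim_insert_notin[OF sH z'nH] dH by simp
  have vX0: "vert X0" using sgX0 dX0 unfolding pg_vertex_def by simp
  have sX0: "subspace X0" unfolding X0_def by simp
  have HX0: "H \<subseteq> X0" and z'X0: "z' \<in> X0" unfolding X0_def using span_superset[of "insert z' H"] by auto
  have X0perp: "X0 \<subseteq> perp B X"
  proof -
    have "H \<subseteq> perp B X" using HX sgX unfolding sing_eq perp_def by auto
    thus ?thesis unfolding X0_def using z'X by (intro span_minimal subspace_perp) auto
  qed
  have oXX0: "orth X X0" using X0perp unfolding orth_def perp_def by auto
  have dXX0: "dim (X \<inter> X0) + 1 = k"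
  proof -
    have "dim H \<le> dim (X \<inter> X0)" using dim_le HX HX0 by (metis le_inf_iff)
    moreover have "dim (X \<inter> X0) < k"
    proof (rule ccontr)
      assume "\<not> dim (X \<inter> X0) < k"
      hence "X \<inter> X0 = X" "X \<inter> X0 = X0" using dX dX0 sX sX0
        by (metis inf_le1 inf_le2 not_less sub_eq_dim subspace_inter)+
      thus False using z'X0 z'nX by auto
    qed
    ultimately show ?thesis using dH by linarith
  qed
  have aXX0: "adj X X0" by (rule adj_intro[OF X vX0 oXX0 dXX0])
  have yX0: "y \<in> perp B X0" unfolding X0_def perp_insert_span
  proof
    show "B z' y = 0" using Byz' B_refl by simp
    show "y \<in> perp B H" using yH .
  qed
  have ynX0: "y \<notin> X0"
  proof
    assume "y \<in> X0"
    then obtain d where d: "y - scale d z' \<in> span H" unfolding X0_def using span_breakdown_eq by blast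
    hence dH': "y - scale d z' \<in> H" using spanS[OF sH] by simp
    show False
    proof (cases "d = 0")
      case True thus False using dH' yHn by simp
    next
      case False
      have "y - (y - scale d z') \<in> U" by (rule subspace_diff[OF sU yU]) (use dH' HU in auto)
      hence "scale d z' \<in> U" by simp
      hence "scale (inverse d) (scale d z') \<in> U" using sU by (rule subspace_scale[rotated])
      thus False using False z'nU by simp
    qed
  qed
  have X0Y: "X0 \<noteq> Y" using ynX0 y(1) by auto
  have no0: "\<not> opposite B X0 Y" using yX0 ynX0 y(1) unfolding opposite_def by auto
  have "X0 \<inter> Y \<subseteq> X \<inter> Y" by (rule opp_nb[OF o aXX0])
  moreover have "X \<inter> Y \<subseteq> X0 \<inter> Y" using WH HX0 by auto
  ultimately have e: "X0 \<inter> Y = X \<inter> Y" by auto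
  obtain P where P: "walk P X0 Y" "length P = Suc (k - dim (X0 \<inter> Y))"
    using path_nonopp[OF vX0 Y X0Y no0] by blast
  have "walk (X # P) X Y" by (rule walk_cons[OF aXX0 P(1)])
  thus ?thesis using P(2) e by (intro exI[of _ "X # P"]) simp
qed

lemma dist_nonopp:
  assumes X: "vert X" and Y: "vert Y" and XY: "X \<noteq> Y" and no: "\<not> opposite B X Y"
  shows "gdist X Y = k - dim (X \<inter> Y)"
proof -
  obtain P where P: "walk P X Y" "length P = Suc (k - dim (X \<inter> Y))" using path_nonopp[OF assms] by blast
  show ?thesis
  proof (rule dist_exact[OF P])
    fix P' assume w': "walk P' X Y"
    have "k \<le> dim (X \<inter> Y) + (length P' - 1)" by (rule walk_lower[OF w'])
    moreover have "length P' \<noteq> 0" using walk_ends[OF w'] by simp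
    ultimately show "Suc (k - dim (X \<inter> Y)) \<le> length P'" by linarith
  qed
qed

lemma walk_lower_opp:
  assumes o: "opposite B X Y" and w: "walk P X Y"
  shows "Suc (Suc (k - dim (X \<inter> Y))) \<le> length P"
proof -
  have XY: "X \<noteq> Y" using o unfolding opposite_def by auto
  have e: "P ! 0 = X" "P ! (length P - 1) = Y" "P \<noteq> []" using walk_ends[OF w] by auto
  have l2: "2 \<le> length P"
  proof (rule ccontr)
    assume "\<not> 2 \<le> length P"
    moreover have "length P \<noteq> 0" using e(3) by simp
    ultimately have "length P = 1" by linarith
    thus False using e XY by simp
  qed
  have a: "adj X (P ! 1)" using walk_adj[OF w, of 0] l2 e by simp
  have w1: "walk (drop 1 P) (P ! 1) Y" using walk_drop[OF w, of 1] l2 by simp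
  have "k \<le> dim (P ! 1 \<inter> Y) + (length (drop 1 P) - 1)" by (rule walk_lower[OF w1])
  moreover have "dim (P ! 1 \<inter> Y) \<le> dim (X \<inter> Y)" using opp_nb[OF o a] dim_le by blast
  ultimately show ?thesis using l2 by simp
qed

lemma dist_opp:
  assumes X: "vert X" and Y: "vert Y" and o: "opposite B X Y"
  shows "gdist X Y = Suc (k - dim (X \<inter> Y))"
proof -
  obtain P where P: "walk P X Y" "length P = Suc (Suc (k - dim (X \<inter> Y)))" using path_opp[OF assms] by blast
  show ?thesis by (rule dist_exact[OF P]) (rule walk_lower_opp[OF o])
qed

end

context fs begin

definition rowtri :: "(nat \<Rightarrow> 'v) \<Rightarrow> (nat \<Rightarrow> 'v) \<Rightarrow> nat \<Rightarrow> bool" where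
  "rowtri x x' m \<longleftrightarrow> (\<forall>i\<in>{1..m}. \<exists>c. c \<noteq> 0 \<and> x' i - scale c (x i) \<in> span (x ` {1..<i}))"

definition coltri :: "(nat \<Rightarrow> 'v) \<Rightarrow> (nat \<Rightarrow> 'v) \<Rightarrow> nat \<Rightarrow> bool" where
  "coltri y y' n \<longleftrightarrow> (\<forall>j\<in>{1..n}. \<exists>d. d \<noteq> 0 \<and> y' j - scale d (y j) \<in> span (y ` {j<..n}))"

definition pperm :: "(nat \<Rightarrow> 'v) \<Rightarrow> (nat \<Rightarrow> 'v) \<Rightarrow> nat \<Rightarrow> nat \<Rightarrow> bool" where
  "pperm x y m n \<longleftrightarrow>
    (\<forall>i\<in>{1..m}. (\<forall>j\<in>{1..n}. B (x i) (y j) = 0) \<or>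
       (\<exists>p\<in>{1..n}. B (x i) (y p) = 1 \<and> (\<forall>j\<in>{1..n}. j \<noteq> p \<longrightarrow> B (x i) (y j) = 0))) \<and>
    (\<forall>i1\<in>{1..m}. \<forall>i2\<in>{1..m}. \<forall>j\<in>{1..n}. i1 \<noteq> i2 \<longrightarrow> B (x i1) (y j) \<noteq> 0 \<longrightarrow> B (x i2) (y j) = 0)"

lemma rowtri_in:
  assumes "rowtri x x' m" "i \<in> {1..m}"
  shows "x' i \<in> span (x ` {1..i})"
proof -
  obtain c where c: "x' i - scale c (x i) \<in> span (x ` {1..<i})" using assms unfolding rowtri_def by blast
  have "span (x ` {1..<i}) \<subseteq> span (x ` {1..i})" by (rule span_mono) auto
  hence "x' i - scale c (x i) \<in> span (x ` {1..i})" using c by blast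
  moreover have "scale c (x i) \<in> span (x ` {1..i})" using assms(2) by (intro span_scale span_base) auto
  ultimately have "(x' i - scale c (x i)) + scale c (x i) \<in> span (x ` {1..i})" by (rule span_add)
  thus ?thesis by simp
qed

lemma rowtri_sub:
  assumes "rowtri x x' m" "a \<le> m"
  shows "span (x' ` {1..a}) \<subseteq> span (x ` {1..m})"
proof (rule span_minimal[OF _ subspace_span], rule image_subsetI)
  fix i assume "i \<in> {1..a}"
  hence "x' i \<in> span (x ` {1..i})" using rowtri_in[OF assms(1)] assms(2) by auto
  moreover have "span (x ` {1..i}) \<subseteq> span (x ` {1..m})" using \<open>i \<in> {1..a}\<close> assms(2) by (intro span_mono) auto
  ultimately show "x' i \<in> span (x ` {1..m})" by blast
qed

lemma coltri_in:
  assumes "coltri y y' n" "j \<in> {1..n}"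
  shows "y' j \<in> span (y ` {j..n})"
proof -
  obtain d where d: "y' j - scale d (y j) \<in> span (y ` {j<..n})" using assms unfolding coltri_def by blast
  have "span (y ` {j<..n}) \<subseteq> span (y ` {j..n})" by (rule span_mono) auto
  hence "y' j - scale d (y j) \<in> span (y ` {j..n})" using d by blast
  moreover have "scale d (y j) \<in> span (y ` {j..n})" using assms(2) by (intro span_scale span_base) auto
  ultimately have "(y' j - scale d (y j)) + scale d (y j) \<in> span (y ` {j..n})" by (rule span_add)
  thus ?thesis by simp
qed

lemma clear:
  assumes pp: "pperm x' y' m n" and a: "a \<le> m"
  shows "\<exists>r'. r' - r \<in> span (x' ` {1..a}) \<and>
     (\<forall>l\<in>{1..n}. (\<exists>b\<in>{1..a}. B (x' b) (y' l) \<noteq> 0) \<longrightarrow> B r' (y' l) = 0) \<and>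
     (\<forall>l\<in>{1..n}. (\<forall>b\<in>{1..a}. B (x' b) (y' l) = 0) \<longrightarrow> B r' (y' l) = B r (y' l))"
  using a
proof (induction a)
  case 0 thus ?case by (intro exI[of _ r]) (simp add: span_zero)
next
  case (Suc a)
  then obtain ra where ra: "ra - r \<in> span (x' ` {1..a})"
     "\<forall>l\<in>{1..n}. (\<exists>b\<in>{1..a}. B (x' b) (y' l) \<noteq> 0) \<longrightarrow> B ra (y' l) = 0"
     "\<forall>l\<in>{1..n}. (\<forall>b\<in>{1..a}. B (x' b) (y' l) = 0) \<longrightarrow> B ra (y' l) = B r (y' l)" by auto
  have sp: "span (x' ` {1..a}) \<subseteq> span (x' ` {1..Suc a})" by (rule span_mono) auto
  have row: "(\<forall>j\<in>{1..n}. B (x' (Suc a)) (y' j) = 0) \<or>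
       (\<exists>p\<in>{1..n}. B (x' (Suc a)) (y' p) = 1 \<and> (\<forall>j\<in>{1..n}. j \<noteq> p \<longrightarrow> B (x' (Suc a)) (y' j) = 0))"
    using pp Suc.prems unfolding pperm_def by auto
  have eS: "{1..Suc a} = insert (Suc a) {1..a}" by (simp add: atLeastAtMostSuc_conv)
  have splitb: "\<And>P. (\<exists>b\<in>{1..Suc a}. P b) \<longleftrightarrow> (\<exists>b\<in>{1..a}. P b) \<or> P (Suc a)"
    unfolding eS by blast
  have splitb2: "\<And>P. (\<forall>b\<in>{1..Suc a}. P b) \<longleftrightarrow> (\<forall>b\<in>{1..a}. P b) \<and> P (Suc a)"
    unfolding eS by blast
  show ?case
  proof (cases "\<forall>j\<in>{1..n}. B (x' (Suc a)) (y' j) = 0")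
    case True
    have c1: "ra - r \<in> span (x' ` {1..Suc a})" using ra(1) sp by blast
    have c2: "\<forall>l\<in>{1..n}. (\<exists>b\<in>{1..Suc a}. B (x' b) (y' l) \<noteq> 0) \<longrightarrow> B ra (y' l) = 0"
    proof (intro ballI impI)
      fix l assume l: "l \<in> {1..n}" and ex: "\<exists>b\<in>{1..Suc a}. B (x' b) (y' l) \<noteq> 0"
      have "B (x' (Suc a)) (y' l) = 0" using True l by blast
      hence "\<exists>b\<in>{1..a}. B (x' b) (y' l) \<noteq> 0" using ex splitb[of "\<lambda>b. B (x' b) (y' l) \<noteq> 0"] by simp
      thus "B ra (y' l) = 0" using ra(2) l by blast
    qed
    have c3: "\<forall>l\<in>{1..n}. (\<forall>b\<in>{1..Suc a}. B (x' b) (y' l) = 0) \<longrightarrow> B ra (y' l) = B r (y' l)"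
    proof (intro ballI impI)
      fix l assume l: "l \<in> {1..n}" and al: "\<forall>b\<in>{1..Suc a}. B (x' b) (y' l) = 0"
      hence "\<forall>b\<in>{1..a}. B (x' b) (y' l) = 0" using splitb2[of "\<lambda>b. B (x' b) (y' l) = 0"] by simp
      thus "B ra (y' l) = B r (y' l)" using ra(3) l by blast
    qed
    show ?thesis using c1 c2 c3 by blast
  next
    case False
    then obtain p where p: "p \<in> {1..n}" "B (x' (Suc a)) (y' p) = 1"
      "\<forall>j\<in>{1..n}. j \<noteq> p \<longrightarrow> B (x' (Suc a)) (y' j) = 0" using row by auto
    define r2 where "r2 = ra - scale (B ra (y' p)) (x' (Suc a))"
    have Br2: "B r2 (y' l) = B ra (y' l) - B ra (y' p) * B (x' (Suc a)) (y' l)" for l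
      unfolding r2_def by (simp add: B_diff1 B_scale1)
    have "r2 - r = (ra - r) - scale (B ra (y' p)) (x' (Suc a))" unfolding r2_def by simp
    also have "\<dots> \<in> span (x' ` {1..Suc a})"
    proof (rule span_diff)
      show "ra - r \<in> span (x' ` {1..Suc a})" using ra(1) sp by blast
      show "scale (B ra (y' p)) (x' (Suc a)) \<in> span (x' ` {1..Suc a})"
        by (rule span_scale, rule span_base) auto
    qed
    finally have c1: "r2 - r \<in> span (x' ` {1..Suc a})" .
    have c2: "\<forall>l\<in>{1..n}. (\<exists>b\<in>{1..Suc a}. B (x' b) (y' l) \<noteq> 0) \<longrightarrow> B r2 (y' l) = 0"
    proof (intro ballI impI)
      fix l assume l: "l \<in> {1..n}" and ex: "\<exists>b\<in>{1..Suc a}. B (x' b) (y' l) \<noteq> 0"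
      show "B r2 (y' l) = 0"
      proof (cases "l = p")
        case True thus ?thesis using Br2 p by simp
      next
        case False
        hence z: "B (x' (Suc a)) (y' l) = 0" using p l by auto
        hence "\<exists>b\<in>{1..a}. B (x' b) (y' l) \<noteq> 0" using ex splitb[of "\<lambda>b. B (x' b) (y' l) \<noteq> 0"] by simp
        thus ?thesis using ra(2) l Br2 z by simp
      qed
    qed
    have c3: "\<forall>l\<in>{1..n}. (\<forall>b\<in>{1..Suc a}. B (x' b) (y' l) = 0) \<longrightarrow> B r2 (y' l) = B r (y' l)"
    proof (intro ballI impI)
      fix l assume l: "l \<in> {1..n}" and al: "\<forall>b\<in>{1..Suc a}. B (x' b) (y' l) = 0"
      hence z: "B (x' (Suc a)) (y' l) = 0" and al': "\<forall>b\<in>{1..a}. B (x' b) (y' l) = 0"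
        using splitb2[of "\<lambda>b. B (x' b) (y' l) = 0"] by simp_all
      thus "B r2 (y' l) = B r (y' l)" using ra(3) l Br2 by simp
    qed
    show ?thesis using c1 c2 c3 by blast
  qed
qed

end

context fs begin

lemma pperm_cong:
  assumes eq: "\<And>b l. b \<in> {1..m} \<Longrightarrow> l \<in> {1..n} \<Longrightarrow> B (x b) (y' l) = B (x b) (y l)"
    and pp: "pperm x y m n"
  shows "pperm x y' m n"
proof -
  have r: "\<forall>i\<in>{1..m}. (\<forall>j\<in>{1..n}. B (x i) (y j) = 0) \<or>
       (\<exists>p\<in>{1..n}. B (x i) (y p) = 1 \<and> (\<forall>j\<in>{1..n}. j \<noteq> p \<longrightarrow> B (x i) (y j) = 0))"
    and c: "\<forall>i1\<in>{1..m}. \<forall>i2\<in>{1..m}. \<forall>j\<in>{1..n}. i1 \<noteq> i2 \<longrightarrow> B (x i1) (y j) \<noteq> 0 \<longrightarrow> B (x i2) (y j) = 0"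
    using pp unfolding pperm_def by auto
  show ?thesis unfolding pperm_def
  proof (intro conjI ballI impI)
    fix i assume i: "i \<in> {1..m}"
    show "(\<forall>j\<in>{1..n}. B (x i) (y' j) = 0) \<or>
       (\<exists>p\<in>{1..n}. B (x i) (y' p) = 1 \<and> (\<forall>j\<in>{1..n}. j \<noteq> p \<longrightarrow> B (x i) (y' j) = 0))"
      using r[rule_format, OF i] eq[OF i] by auto
  next
    fix i1 i2 j assume "i1 \<in> {1..m}" "i2 \<in> {1..m}" "j \<in> {1..n}" "i1 \<noteq> i2" "B (x i1) (y' j) \<noteq> 0"
    hence "B (x i1) (y j) \<noteq> 0" "i1 \<in> {1..m}" "i2 \<in> {1..m}" "j \<in> {1..n}" "i1 \<noteq> i2" using eq by auto
    hence "B (x i2) (y j) = 0" using c by blast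
    thus "B (x i2) (y' j) = 0" using eq \<open>i2 \<in> {1..m}\<close> \<open>j \<in> {1..n}\<close> by simp
  qed
qed

lemma pperm_ext:
  assumes pp: "pperm x y m n"
    and row: "(\<forall>j\<in>{1..n}. B v (y j) = 0) \<or> (\<exists>p\<in>{1..n}. B v (y p) = 1 \<and> (\<forall>j\<in>{1..n}. j \<noteq> p \<longrightarrow> B v (y j) = 0))"
    and col: "\<And>j. j \<in> {1..n} \<Longrightarrow> B v (y j) \<noteq> 0 \<Longrightarrow> \<forall>b\<in>{1..m}. B (x b) (y j) = 0"
  shows "pperm (x(Suc m := v)) y (Suc m) n"
proof -
  have r: "\<forall>i\<in>{1..m}. (\<forall>j\<in>{1..n}. B (x i) (y j) = 0) \<or>
       (\<exists>p\<in>{1..n}. B (x i) (y p) = 1 \<and> (\<forall>j\<in>{1..n}. j \<noteq> p \<longrightarrow> B (x i) (y j) = 0))"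
    and c: "\<forall>i1\<in>{1..m}. \<forall>i2\<in>{1..m}. \<forall>j\<in>{1..n}. i1 \<noteq> i2 \<longrightarrow> B (x i1) (y j) \<noteq> 0 \<longrightarrow> B (x i2) (y j) = 0"
    using pp unfolding pperm_def by auto
  have eS: "{1..Suc m} = insert (Suc m) {1..m}" by (simp add: atLeastAtMostSuc_conv)
  show ?thesis unfolding pperm_def
  proof (intro conjI ballI impI)
    fix i assume i: "i \<in> {1..Suc m}"
    show "(\<forall>j\<in>{1..n}. B ((x(Suc m := v)) i) (y j) = 0) \<or>
       (\<exists>p\<in>{1..n}. B ((x(Suc m := v)) i) (y p) = 1 \<and> (\<forall>j\<in>{1..n}. j \<noteq> p \<longrightarrow> B ((x(Suc m := v)) i) (y j) = 0))"
    proof (cases "i = Suc m")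
      case True thus ?thesis using row by simp
    next
      case False
      hence "i \<in> {1..m}" using i eS by auto
      thus ?thesis using r False by simp
    qed
  next
    fix i1 i2 j assume i1: "i1 \<in> {1..Suc m}" and i2: "i2 \<in> {1..Suc m}" and j: "j \<in> {1..n}"
      and ne: "i1 \<noteq> i2" and nz: "B ((x(Suc m := v)) i1) (y j) \<noteq> 0"
    show "B ((x(Suc m := v)) i2) (y j) = 0"
    proof (cases "i1 = Suc m")
      case True
      hence "i2 \<in> {1..m}" using i2 ne eS by auto
      moreover have "B v (y j) \<noteq> 0" using nz True by simp
      hence "\<forall>b\<in>{1..m}. B (x b) (y j) = 0" using col[OF j] by blast
      ultimately have "B (x i2) (y j) = 0" by blast
      moreover have "i2 \<noteq> Suc m" using ne True by simp
      ultimately show ?thesis by simp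
    next
      case False
      hence i1': "i1 \<in> {1..m}" using i1 eS by auto
      show ?thesis
      proof (cases "i2 = Suc m")
        case True
        have "B (x i1) (y j) \<noteq> 0" using nz False by simp
        hence "B v (y j) = 0" using col[OF j] i1' by blast
        thus ?thesis using True by simp
      next
        case F2: False
        hence i2': "i2 \<in> {1..m}" using i2 eS by auto
        have "B (x i1) (y j) \<noteq> 0" using nz False by simp
        hence "B (x i2) (y j) = 0" using c i1' i2' j ne by blast
        thus ?thesis using F2 by simp
      qed
    qed
  qed
qed

lemma rowtri_ext:
  assumes rt: "rowtri x x' m" and c: "c \<noteq> 0" and v: "v - scale c (x (Suc m)) \<in> span (x ` {1..<Suc m})"
  shows "rowtri x (x'(Suc m := v)) (Suc m)"
  unfolding rowtri_def
proof
  fix i assume i: "i \<in> {1..Suc m}"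
  show "\<exists>c. c \<noteq> 0 \<and> (x'(Suc m := v)) i - scale c (x i) \<in> span (x ` {1..<i})"
  proof (cases "i = Suc m")
    case True thus ?thesis using c v by auto
  next
    case False
    hence "i \<in> {1..m}" using i by auto
    thus ?thesis using rt False unfolding rowtri_def by auto
  qed
qed

lemma normal_form: "\<exists>x' y'. rowtri x x' m \<and> coltri y y' n \<and> pperm x' y' m n"
proof (induction m)
  case 0
  have "coltri y y n" unfolding coltri_def by (auto intro!: exI[of _ 1] simp: span_zero)
  moreover have "rowtri x x 0" "pperm x y 0 n" unfolding rowtri_def pperm_def by auto
  ultimately show ?case by blast
next
  case (Suc m)
  then obtain x' y' where rt: "rowtri x x' m" and ct: "coltri y y' n" and pp: "pperm x' y' m n" by blast
  obtain r' where r1: "r' - x (Suc m) \<in> span (x' ` {1..m})"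
     and r2: "\<forall>l\<in>{1..n}. (\<exists>b\<in>{1..m}. B (x' b) (y' l) \<noteq> 0) \<longrightarrow> B r' (y' l) = 0"
    using clear[OF pp le_refl, of "x (Suc m)"] by blast
  have spx: "span (x' ` {1..m}) \<subseteq> span (x ` {1..<Suc m})"
    using rowtri_sub[OF rt le_refl] by (simp add: atLeastLessThanSuc_atLeastAtMost)
  have r1': "r' - x (Suc m) \<in> span (x ` {1..<Suc m})" using r1 spx by blast
  show ?case
  proof (cases "\<forall>l\<in>{1..n}. B r' (y' l) = 0")
    case True
    have "rowtri x (x'(Suc m := r')) (Suc m)" by (rule rowtri_ext[OF rt, of 1]) (use r1' in simp_all)
    moreover have "pperm (x'(Suc m := r')) y' (Suc m) n"
      by (rule pperm_ext[OF pp]) (use True in auto)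
    ultimately show ?thesis using ct by blast
  next
    case False
    define L where "L = {l\<in>{1..n}. B r' (y' l) \<noteq> 0}"
    have Lne: "L \<noteq> {}" and Lfin: "finite L" using False L_def by auto
    define p where "p = Max L"
    have pL: "p \<in> L" unfolding p_def using Lne Lfin by (rule Max_in[rotated])
    have pmax: "B r' (y' l) = 0" if "l \<in> {1..n}" "p < l" for l
    proof (rule ccontr)
      assume "B r' (y' l) \<noteq> 0"
      hence "l \<in> L" using that L_def by auto
      hence "l \<le> p" unfolding p_def using Max_ge[OF Lfin] by blast
      thus False using that by simp
    qed
    define \<beta> where "\<beta> = B r' (y' p)"
    have \<beta>: "\<beta> \<noteq> 0" and pn: "p \<in> {1..n}" using pL L_def \<beta>_def by auto
    have colp: "\<forall>b\<in>{1..m}. B (x' b) (y' p) = 0" using r2 pn \<beta> \<beta>_def by blast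
    define y'' where "y'' = (\<lambda>l. if l < p then y' l - scale (\<sigma> (B r' (y' l) / \<beta>)) (y' p) else y' l)"
    have By'': "B u (y'' l) = (if l < p then B u (y' l) - (B r' (y' l) / \<beta>) * B u (y' p) else B u (y' l))" for u l
      unfolding y''_def by (simp add: B_diff2 B_scale2 \<sigma>_inv)
    have same: "B (x' b) (y'' l) = B (x' b) (y' l)" if "b \<in> {1..m}" for b l
      using colp that By'' by simp
    have rrow: "B r' (y'' l) = (if l = p then \<beta> else 0)" if "l \<in> {1..n}" for l
    proof -
      consider "l < p" | "l = p" | "p < l" by linarith
      thus ?thesis
      proof cases
        case 1 thus ?thesis using By''[of r' l] \<beta> \<beta>_def by simp
      next
        case 2 thus ?thesis using By''[of r' l] \<beta>_def by simp
      next
        case 3 thus ?thesis using By''[of r' l] pmax[OF that] by simp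
      qed
    qed
    define v where "v = scale (inverse \<beta>) r'"
    have vrow: "B v (y'' l) = (if l = p then 1 else 0)" if "l \<in> {1..n}" for l
      unfolding v_def using rrow[OF that] \<beta> by (simp add: B_scale1)
    have ct'': "coltri y y'' n" unfolding coltri_def
    proof
      fix l assume l: "l \<in> {1..n}"
      obtain d where d: "d \<noteq> 0" "y' l - scale d (y l) \<in> span (y ` {l<..n})" using ct l unfolding coltri_def by blast
      show "\<exists>d. d \<noteq> 0 \<and> y'' l - scale d (y l) \<in> span (y ` {l<..n})"
      proof (cases "l < p")
        case True
        have "y' p \<in> span (y ` {p..n})" by (rule coltri_in[OF ct pn])
        moreover have "span (y ` {p..n}) \<subseteq> span (y ` {l<..n})" using True by (intro span_mono) auto
        ultimately have yp: "y' p \<in> span (y ` {l<..n})" by blast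
        have "y'' l - scale d (y l) = (y' l - scale d (y l)) - scale (\<sigma> (B r' (y' l) / \<beta>)) (y' p)"
          unfolding y''_def using True by simp
        also have "\<dots> \<in> span (y ` {l<..n})" by (rule span_diff[OF d(2) span_scale[OF yp]])
        finally show ?thesis using d(1) by blast
      next
        case False thus ?thesis using d unfolding y''_def by auto
      qed
    qed
    have rt'': "rowtri x (x'(Suc m := v)) (Suc m)"
    proof (rule rowtri_ext[OF rt])
      show "inverse \<beta> \<noteq> 0" using \<beta> by simp
      have "v - scale (inverse \<beta>) (x (Suc m)) = scale (inverse \<beta>) (r' - x (Suc m))"
        unfolding v_def by (simp add: scale_right_diff_distrib)
      also have "\<dots> \<in> span (x ` {1..<Suc m})" using r1' by (rule span_scale)
      finally show "v - scale (inverse \<beta>) (x (Suc m)) \<in> span (x ` {1..<Suc m})" .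
    qed
    have pp'': "pperm x' y'' m n" by (rule pperm_cong[OF same pp])
    have "pperm (x'(Suc m := v)) y'' (Suc m) n"
    proof (rule pperm_ext[OF pp''])
      show "(\<forall>j\<in>{1..n}. B v (y'' j) = 0) \<or> (\<exists>p\<in>{1..n}. B v (y'' p) = 1 \<and> (\<forall>j\<in>{1..n}. j \<noteq> p \<longrightarrow> B v (y'' j) = 0))"
        using vrow pn by auto
      fix j assume j: "j \<in> {1..n}" and nz: "B v (y'' j) \<noteq> 0"
      hence "j = p" using vrow by (auto split: if_splits)
      thus "\<forall>b\<in>{1..m}. B (x' b) (y'' j) = 0" using colp same by simp
    qed
    thus ?thesis using rt'' ct'' by blast
  qed
qed

end

context fs begin

lemma span_insert_tri:
  assumes s: "s \<in> span A" and c: "c \<noteq> 0"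
  shows "span (insert (scale c v + s) A) = span (insert v A)"
proof (rule span_eq[THEN iffD2], rule conjI)
  have "span A \<subseteq> span (insert v A)" by (rule span_mono) auto
  hence "s \<in> span (insert v A)" using s by blast
  moreover have "scale c v \<in> span (insert v A)" by (intro span_scale span_base) auto
  ultimately have "scale c v + s \<in> span (insert v A)" by (rule span_add[rotated])
  thus "insert (scale c v + s) A \<subseteq> span (insert v A)" using span_superset by blast
  have "span A \<subseteq> span (insert (scale c v + s) A)" by (rule span_mono) auto
  hence s': "s \<in> span (insert (scale c v + s) A)" using s by blast
  have "scale c v + s \<in> span (insert (scale c v + s) A)" by (intro span_base) auto
  hence "(scale c v + s) - s \<in> span (insert (scale c v + s) A)" using s' by (rule span_diff)
  hence "scale c v \<in> span (insert (scale c v + s) A)" by simp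
  hence "scale (inverse c) (scale c v) \<in> span (insert (scale c v + s) A)" by (rule span_scale)
  hence "v \<in> span (insert (scale c v + s) A)" using c by simp
  thus "insert v A \<subseteq> span (insert (scale c v + s) A)" using span_superset by blast
qed

lemma span_insert_cong:
  assumes e: "span A = span A'" shows "span (insert v A) = span (insert v A')"
proof (rule span_eq[THEN iffD2], rule conjI)
  have "span A' \<subseteq> span (insert v A')" by (rule span_mono) auto
  hence "A \<subseteq> span (insert v A')" using span_superset[of A] e by blast
  thus "insert v A \<subseteq> span (insert v A')" using span_superset[of "insert v A'"] by blast
  have "span A \<subseteq> span (insert v A)" by (rule span_mono) auto
  hence "A' \<subseteq> span (insert v A)" using span_superset[of A'] e by blast
  thus "insert v A' \<subseteq> span (insert v A)" using span_superset[of "insert v A"] by blast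
qed

lemma span_Un_span: "span (A \<union> span C) = span (A \<union> C)"
proof (rule span_eq[THEN iffD2], rule conjI)
  have "span C \<subseteq> span (A \<union> C)" by (rule span_mono) auto
  thus "A \<union> span C \<subseteq> span (A \<union> C)" using span_superset by blast
  show "A \<union> C \<subseteq> span (A \<union> span C)" using span_superset[of "A \<union> span C"] span_superset[of C] by blast
qed

lemma rowtri_span:
  assumes rt: "rowtri x x' m"
  shows "j \<le> m \<Longrightarrow> span (x' ` {1..j} \<union> S) = span (x ` {1..j} \<union> S)"
proof (induction j)
  case 0 thus ?case by simp
next
  case (Suc j)
  have IH: "span (x' ` {1..j} \<union> S) = span (x ` {1..j} \<union> S)" using Suc by simp
  have eS: "{1..Suc j} = insert (Suc j) {1..j}" by (simp add: atLeastAtMostSuc_conv)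
  have Sj: "Suc j \<in> {1..m}" using Suc.prems by simp
  obtain c where c: "c \<noteq> 0" "x' (Suc j) - scale c (x (Suc j)) \<in> span (x ` {1..<Suc j})"
    using rt Sj unfolding rowtri_def by blast
  have "span (x ` {1..<Suc j}) \<subseteq> span (x ` {1..j} \<union> S)"
    by (rule span_mono) (auto simp: atLeastLessThanSuc_atLeastAtMost)
  hence s: "x' (Suc j) - scale c (x (Suc j)) \<in> span (x' ` {1..j} \<union> S)" using c(2) IH by blast
  have "span (x' ` {1..Suc j} \<union> S) = span (insert (scale c (x (Suc j)) + (x' (Suc j) - scale c (x (Suc j)))) (x' ` {1..j} \<union> S))"
    unfolding eS by simp
  also have "\<dots> = span (insert (x (Suc j)) (x' ` {1..j} \<union> S))" by (rule span_insert_tri[OF s c(1)])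
  also have "\<dots> = span (insert (x (Suc j)) (x ` {1..j} \<union> S))" by (rule span_insert_cong[OF IH])
  also have "\<dots> = span (x ` {1..Suc j} \<union> S)" unfolding eS by simp
  finally show ?case .
qed

lemma coltri_span:
  assumes ct: "coltri y y' n" and j: "1 \<le> j" "j \<le> Suc n"
  shows "span (y' ` {j..n} \<union> S) = span (y ` {j..n} \<union> S)"
  using j(2)
proof (induction j rule: inc_induct)
  case base thus ?case by simp
next
  case (step l)
  have IH: "span (y' ` {Suc l..n} \<union> S) = span (y ` {Suc l..n} \<union> S)" using step.IH .
  have l: "l \<in> {1..n}" using step.hyps j(1) by auto
  have eS: "{l..n} = insert l {Suc l..n}" using l by (auto simp: Icc_eq_insert_lb_nat)
  obtain c where c: "c \<noteq> 0" "y' l - scale c (y l) \<in> span (y ` {l<..n})"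
    using ct l unfolding coltri_def by blast
  have "span (y ` {l<..n}) \<subseteq> span (y ` {Suc l..n} \<union> S)"
    by (rule span_mono) auto
  hence s: "y' l - scale c (y l) \<in> span (y' ` {Suc l..n} \<union> S)" using c(2) IH by blast
  have "span (y' ` {l..n} \<union> S) = span (insert (scale c (y l) + (y' l - scale c (y l))) (y' ` {Suc l..n} \<union> S))"
    unfolding eS by simp
  also have "\<dots> = span (insert (y l) (y' ` {Suc l..n} \<union> S))" by (rule span_insert_tri[OF s c(1)])
  also have "\<dots> = span (insert (y l) (y ` {Suc l..n} \<union> S))" by (rule span_insert_cong[OF IH])
  also have "\<dots> = span (y ` {l..n} \<union> S)" unfolding eS by simp
  finally show ?case .
qed

lemma flag_up:
  assumes sub: "\<And>j. j \<le> m \<Longrightarrow> subspace (G j)" and mono: "\<And>j. j < m \<Longrightarrow> G j \<subseteq> G (Suc j)"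
    and dm: "\<And>j. j \<le> m \<Longrightarrow> dim (G j) = dim (G 0) + j"
    and v: "\<And>j. j \<in> {1..m} \<Longrightarrow> v j \<in> G j \<and> v j \<notin> G (j - 1)"
  shows "j \<le> m \<Longrightarrow> span (v ` {1..j} \<union> G 0) = G j"
proof (induction j)
  case 0 thus ?case using sub[of 0] by (simp add: span_eq_iff)
next
  case (Suc j)
  have sG: "span (G j) = G j" by (intro span_eq_iff[THEN iffD2] sub) (use Suc.prems in simp)
  have IH: "span (v ` {1..j} \<union> G 0) = span (G j)" unfolding sG using Suc.IH Suc.prems by simp
  have eS: "{1..Suc j} = insert (Suc j) {1..j}" by (simp add: atLeastAtMostSuc_conv)
  have vj: "v (Suc j) \<in> G (Suc j)" "v (Suc j) \<notin> G j" using v[of "Suc j"] Suc.prems by auto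
  have "span (v ` {1..Suc j} \<union> G 0) = span (insert (v (Suc j)) (v ` {1..j} \<union> G 0))" unfolding eS by simp
  also have "\<dots> = span (insert (v (Suc j)) (G j))" by (rule span_insert_cong[OF IH])
  also have "\<dots> = G (Suc j)"
  proof (rule fd.subspace_dim_equal[OF subspace_span sub[OF Suc.prems]])
    show "span (insert (v (Suc j)) (G j)) \<subseteq> G (Suc j)"
      using vj mono[of j] Suc.prems sub[OF Suc.prems] by (intro span_minimal) auto
    have "v (Suc j) \<notin> span (G j)" unfolding sG using vj by simp
    hence "dim (insert (v (Suc j)) (G j)) = dim (G j) + 1" using fd.dim_insert by simp
    thus "dim (G (Suc j)) \<le> dim (span (insert (v (Suc j)) (G j)))" using dm[of j] dm[of "Suc j"] Suc.prems by simp
  qed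
  finally show ?case .
qed

lemma flag_choose_up:
  assumes sub: "\<And>j. j \<le> m \<Longrightarrow> subspace (G j)" and mono: "\<And>j. j < m \<Longrightarrow> G j \<subseteq> G (Suc j)"
    and dm: "\<And>j. j \<le> m \<Longrightarrow> dim (G j) = dim (G 0) + j"
  shows "\<exists>v. \<forall>j\<in>{1..m}. v j \<in> G j \<and> v j \<notin> G (j - 1)"
proof -
  have "\<forall>j\<in>{1..m}. \<exists>w. w \<in> G j \<and> w \<notin> G (j - 1)"
  proof
    fix j assume j: "j \<in> {1..m}"
    show "\<exists>w. w \<in> G j \<and> w \<notin> G (j - 1)"
    proof (rule ccontr)
      assume "\<not> ?thesis"
      hence "G j \<subseteq> G (j - 1)" by auto
      hence "dim (G j) \<le> dim (G (j - 1))" by (rule fd.dim_subset)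
      thus False using dm[of j] dm[of "j - 1"] j by auto
    qed
  qed
  thus ?thesis by (rule bchoice)
qed

lemma flag_down:
  assumes sub: "\<And>j. 1 \<le> j \<Longrightarrow> j \<le> Suc m \<Longrightarrow> subspace (G j)"
    and mono: "\<And>j. 1 \<le> j \<Longrightarrow> j \<le> m \<Longrightarrow> G (Suc j) \<subseteq> G j"
    and dm: "\<And>j. 1 \<le> j \<Longrightarrow> j \<le> Suc m \<Longrightarrow> dim (G j) + j = dim (G (Suc m)) + Suc m"
    and v: "\<And>j. j \<in> {1..m} \<Longrightarrow> v j \<in> G j \<and> v j \<notin> G (Suc j)"
    and j: "1 \<le> j" "j \<le> Suc m"
  shows "span (v ` {j..m} \<union> G (Suc m)) = G j"
  using j(2)
proof (induction j rule: inc_induct)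
  case base thus ?case using sub[of "Suc m"] by (simp add: span_eq_iff)
next
  case (step l)
  have l: "1 \<le> l" "l \<le> m" using step.hyps j(1) by auto
  have sG: "span (G (Suc l)) = G (Suc l)" by (intro span_eq_iff[THEN iffD2] sub) (use l in simp_all)
  have IH: "span (v ` {Suc l..m} \<union> G (Suc m)) = span (G (Suc l))"
    unfolding sG using step.IH by simp
  have eS: "{l..m} = insert l {Suc l..m}" using l by (auto simp: Icc_eq_insert_lb_nat)
  have vl: "v l \<in> G l" "v l \<notin> G (Suc l)" using v[of l] l by auto
  have "span (v ` {l..m} \<union> G (Suc m)) = span (insert (v l) (v ` {Suc l..m} \<union> G (Suc m)))" unfolding eS by simp
  also have "\<dots> = span (insert (v l) (G (Suc l)))" by (rule span_insert_cong[OF IH])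
  also have "\<dots> = G l"
  proof (rule fd.subspace_dim_equal[OF subspace_span sub])
    show "span (insert (v l) (G (Suc l))) \<subseteq> G l"
      using vl mono[of l] l sub[of l] by (intro span_minimal) auto
    have "v l \<notin> span (G (Suc l))" unfolding sG using vl by simp
    hence "dim (insert (v l) (G (Suc l))) = dim (G (Suc l)) + 1" using fd.dim_insert by simp
    thus "dim (G l) \<le> dim (span (insert (v l) (G (Suc l))))" using dm[of l] dm[of "Suc l"] l by simp
  qed (use l in auto)
  finally show ?case .
qed

lemma flag_choose_down:
  assumes mono: "\<And>j. 1 \<le> j \<Longrightarrow> j \<le> m \<Longrightarrow> G (Suc j) \<subseteq> G j"
    and dm: "\<And>j. 1 \<le> j \<Longrightarrow> j \<le> Suc m \<Longrightarrow> dim (G j) + j = dim (G (Suc m)) + Suc m"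
  shows "\<exists>v. \<forall>j\<in>{1..m}. v j \<in> G j \<and> v j \<notin> G (Suc j)"
proof -
  have "\<forall>j\<in>{1..m}. \<exists>w. w \<in> G j \<and> w \<notin> G (Suc j)"
  proof
    fix j assume j: "j \<in> {1..m}"
    show "\<exists>w. w \<in> G j \<and> w \<notin> G (Suc j)"
    proof (rule ccontr)
      assume "\<not> ?thesis"
      hence "G j \<subseteq> G (Suc j)" by auto
      hence "dim (G j) \<le> dim (G (Suc j))" by (rule fd.dim_subset)
      thus False using dm[of j] dm[of "Suc j"] j by auto
    qed
  qed
  thus ?thesis by (rule bchoice)
qed

end

context fsw begin

lemma geo_flags:
  assumes g: "walk P X Y" and len: "length P = Suc m" and m: "m + dim (X \<inter> Y) = k"
    and ij: "i \<le> j" "j \<le> m"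
  shows "P ! j \<inter> X \<subseteq> P ! i \<inter> X \<and> P ! i \<inter> Y \<subseteq> P ! j \<inter> Y"
proof
  have gj: "dim (P ! j \<inter> X) + j = k" using geo_struct[OF g len m ij(2)] by simp
  have wt: "walk (take (Suc j) P) X (P ! j)" using walk_take[OF g] ij len by simp
  have lt: "length (take (Suc j) P) = Suc j" using ij len by simp
  have mj: "j + dim (X \<inter> P ! j) = k" using gj by (simp add: Int_commute)
  have "X \<inter> P ! j \<subseteq> take (Suc j) P ! i" using geo_struct[OF wt lt mj ij(1)] by simp
  thus "P ! j \<inter> X \<subseteq> P ! i \<inter> X" using ij by auto
next
  have gi: "dim (P ! i \<inter> Y) + (m - i) = k" using geo_struct[OF g len m] ij by simp
  have wd: "walk (drop i P) (P ! i) Y" using walk_drop[OF g] ij len by simp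
  have ld: "length (drop i P) = Suc (m - i)" using ij len by simp
  have mi: "(m - i) + dim (P ! i \<inter> Y) = k" using gi by simp
  have "P ! i \<inter> Y \<subseteq> drop i P ! (j - i)" using geo_struct[OF wd ld mi] ij by simp
  thus "P ! i \<inter> Y \<subseteq> P ! j \<inter> Y" using ij len by auto
qed

lemma basis_enum:
  assumes "subspace W"
  shows "\<exists>w. inj_on w {1..dim W} \<and> \<not> dependent (w ` {1..dim W}) \<and> span (w ` {1..dim W}) = W"
proof -
  obtain Bw where Bw: "finite Bw" "independent Bw" "span Bw = W" "card Bw = dim W"
    using fd.basis_subspace_exists[OF assms] by metis
  obtain h where h: "bij_betw h {1..card Bw} Bw" using ex_bij_betw_nat_finite_1[OF Bw(1)] by blast
  have "h ` {1..dim W} = Bw" using h Bw(4) by (simp add: bij_betw_def)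
  moreover have "inj_on h {1..dim W}" using h Bw(4) by (simp add: bij_betw_def)
  ultimately show ?thesis using Bw by (intro exI[of _ h]) simp
qed

lemma span_two: "span (span A \<union> span C) = span (A \<union> C)"
proof -
  have "span (span A \<union> span C) = span (span A \<union> C)" by (rule span_Un_span)
  also have "\<dots> = span (C \<union> span A)" by (simp add: Un_commute)
  also have "\<dots> = span (C \<union> A)" by (rule span_Un_span)
  finally show ?thesis by (simp add: Un_commute)
qed

lemma dim_lt_k:
  assumes X: "vert X" and Y: "vert Y" and XY: "X \<noteq> Y"
  shows "dim (X \<inter> Y) < k"
proof (rule ccontr)
  have sX: "subspace X" and sY: "subspace Y" using X Y vert_sub by auto
  assume "\<not> dim (X \<inter> Y) < k"
  hence "X \<inter> Y = X" "X \<inter> Y = Y" using X Y vert_dim sX sY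
    by (metis inf_le1 inf_le2 not_less sub_eq_dim subspace_inter)+
  thus False using XY by simp
qed

end

context fsw begin

lemma struct1:
  assumes X: "vert X" and Y: "vert Y" and XY: "X \<noteq> Y"
    and g: "walk P X Y" and len: "length P = Suc m" and m: "m = k - dim (X \<inter> Y)"
  shows "\<exists>w x y :: nat \<Rightarrow> 'v.
             inj_on w {1..k - m} \<and> \<not> dependent (w ` {1..k - m}) \<and>
             span (w ` {1..k - m}) = X \<inter> Y \<and>
             X = span (x ` {1..m} \<union> w ` {1..k - m}) \<and>
             Y = span (y ` {1..m} \<union> w ` {1..k - m}) \<and>
             (\<forall>i\<le>m. P ! i = span
                  (x ` {1..m - i} \<union> y ` {m - i + 1..m} \<union> w ` {1..k - m})) \<and>
             (\<forall>i j. 1 \<le> i \<and> i \<le> j \<and> j \<le> m \<longrightarrow> B (x i) (y j) = 0) \<and>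
             (\<forall>i\<in>{2..m}. (\<forall>j\<in>{1..<i}. B (x i) (y j) = 0) \<or>
                (\<exists>!i'. i' \<in> {1..<i} \<and> B (x i) (y i') = 1 \<and>
                   (\<forall>j\<in>{1..<i}. j \<noteq> i' \<longrightarrow> B (x i) (y j) = 0))) \<and>
             (\<forall>i1 i2 i1' i2'. i1 \<in> {2..m} \<and> i2 \<in> {2..m} \<and> i1 \<noteq> i2 \<and>
                i1' \<in> {1..<i1} \<and> B (x i1) (y i1') = 1 \<and>
                (\<forall>j\<in>{1..<i1}. j \<noteq> i1' \<longrightarrow> B (x i1) (y j) = 0) \<and>
                i2' \<in> {1..<i2} \<and> B (x i2) (y i2') = 1 \<and>
                (\<forall>j\<in>{1..<i2}. j \<noteq> i2' \<longrightarrow> B (x i2) (y j) = 0) \<longrightarrow> i1' \<noteq> i2')"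
proof -
  define W where "W = X \<inter> Y"
  have sX: "subspace X" and sY: "subspace Y" using X Y vert_sub by auto
  have sW: "subspace W" unfolding W_def using sX sY by (simp add: subspace_inter)
  have dWk: "dim W < k" unfolding W_def by (rule dim_lt_k[OF X Y XY])
  have mk: "m + dim (X \<inter> Y) = k" and km: "k - m = dim W" using m dWk W_def by auto
  have e0: "P ! 0 = X" and em: "P ! m = Y" using walk_ends[OF g] len by auto
  define A where "A i = P ! i \<inter> X" for i
  define C where "C i = P ! i \<inter> Y" for i
  have gs: "X \<inter> Y \<subseteq> P ! i \<and> dim (A i) + i = k \<and> dim (C i) + (m - i) = k \<and> P ! i = span (A i \<union> C i)"
    if "i \<le> m" for i unfolding A_def C_def by (rule geo_struct[OF g len mk that])
  have flA: "A j \<subseteq> A i" and flC: "C i \<subseteq> C j" if "i \<le> j" "j \<le> m" for i j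
    using geo_flags[OF g len mk that] unfolding A_def C_def by auto
  have vP: "vert (P ! i)" if "i \<le> m" for i using walk_vert[OF g] len that by simp
  have sA: "subspace (A i)" and sC: "subspace (C i)" if "i \<le> m" for i
    unfolding A_def C_def using vP[OF that] sX sY vert_sub by (auto simp: subspace_inter)
  have A0: "A 0 = X" and Am: "A m = W" and C0: "C 0 = W" and Cm: "C m = Y"
    unfolding A_def C_def W_def using e0 em by auto
  define Gu where "Gu j = A (m - j)" for j
  have Gu_sub: "subspace (Gu j)" if "j \<le> m" for j unfolding Gu_def using sA by simp
  have Gu_mono: "Gu j \<subseteq> Gu (Suc j)" if "j < m" for j unfolding Gu_def using flA that by simp
  have Gu_dim: "dim (Gu j) = dim (Gu 0) + j" if "j \<le> m" for j
  proof -
    have h1: "dim (A (m - j)) + (m - j) = k" using gs[of "m - j"] that by simp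
    have h2: "dim (A m) + m = k" using gs[of m] by simp
    show ?thesis unfolding Gu_def using h1 h2 that by simp
  qed
  obtain xv where xv: "\<forall>j\<in>{1..m}. xv j \<in> Gu j \<and> xv j \<notin> Gu (j - 1)"
    using flag_choose_up[OF Gu_sub Gu_mono Gu_dim] by blast
  have xspan: "span (xv ` {1..j} \<union> W) = A (m - j)" if "j \<le> m" for j
    using flag_up[OF Gu_sub Gu_mono Gu_dim, where v = xv] xv that Am unfolding Gu_def by simp
  define Gd where "Gd j = C (Suc m - j)" for j
  have Gd_sub: "subspace (Gd j)" if "1 \<le> j" "j \<le> Suc m" for j unfolding Gd_def using sC that by simp
  have Gd_mono: "Gd (Suc j) \<subseteq> Gd j" if "1 \<le> j" "j \<le> m" for j unfolding Gd_def using flC that by simp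
  have Gd_dim: "dim (Gd j) + j = dim (Gd (Suc m)) + Suc m" if "1 \<le> j" "j \<le> Suc m" for j
  proof -
    have h1: "dim (C (Suc m - j)) + (m - (Suc m - j)) = k" using gs[of "Suc m - j"] that by simp
    have h2: "dim (C 0) + m = k" using gs[of 0] by simp
    show ?thesis unfolding Gd_def using h1 h2 that by simp
  qed
  obtain yv where yv: "\<forall>j\<in>{1..m}. yv j \<in> Gd j \<and> yv j \<notin> Gd (Suc j)"
    using flag_choose_down[OF Gd_mono Gd_dim] by blast
  have yspan: "span (yv ` {j..m} \<union> W) = C (Suc m - j)" if "1 \<le> j" "j \<le> Suc m" for j
    using flag_down[OF Gd_sub Gd_mono Gd_dim, where v = yv] yv that C0 unfolding Gd_def by simp
  obtain x y where rt: "rowtri xv x m" and ct: "coltri yv y m" and pp: "pperm x y m m"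
    using normal_form by blast
  have hx: "span (x ` {1..j} \<union> W) = A (m - j)" if "j \<le> m" for j
    using rowtri_span[OF rt that] xspan[OF that] by simp
  have hy: "span (y ` {j..m} \<union> W) = C (Suc m - j)" if "1 \<le> j" "j \<le> Suc m" for j
    using coltri_span[OF ct that] yspan[OF that] by simp
  obtain w where w: "inj_on w {1..dim W}" "\<not> dependent (w ` {1..dim W})" "span (w ` {1..dim W}) = W"
    using basis_enum[OF sW] by blast
  have spw: "span (S \<union> w ` {1..k - m}) = span (S \<union> W)" for S
    using span_Un_span[of S "w ` {1..dim W}"] w(3) km by simp
  have xin: "x i \<in> A (m - i)" if "i \<in> {1..m}" for i
  proof -
    have "x i \<in> span (x ` {1..i} \<union> W)" using that by (intro span_base) auto
    thus ?thesis using hx[of i] that by simp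
  qed
  have yin: "y j \<in> C (Suc m - j)" if "j \<in> {1..m}" for j
  proof -
    have "y j \<in> span (y ` {j..m} \<union> W)" using that by (intro span_base) auto
    thus ?thesis using hy[of j] that by simp
  qed
  have zero: "B (x i) (y j) = 0" if "1 \<le> i" "i \<le> j" "j \<le> m" for i j
  proof -
    have a: "adj (P ! (m - j)) (P ! Suc (m - j))" using walk_adj[OF g] len that by simp
    have ij: "m - j \<le> m - i" "m - i \<le> m" using that by auto
    have "x i \<in> A (m - i)" using xin[of i] that by auto
    hence "x i \<in> A (m - j)" using flA[OF ij] by blast
    hence xi: "x i \<in> P ! (m - j)" unfolding A_def by simp
    have "y j \<in> C (Suc (m - j))" using yin[of j] that by (simp add: Suc_diff_le)
    hence yj: "y j \<in> P ! Suc (m - j)" unfolding C_def by simp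
    show ?thesis using adj_char[OF a] xi yj unfolding orth_def by blast
  qed
  have ppr: "\<forall>i\<in>{1..m}. (\<forall>j\<in>{1..m}. B (x i) (y j) = 0) \<or>
       (\<exists>p\<in>{1..m}. B (x i) (y p) = 1 \<and> (\<forall>j\<in>{1..m}. j \<noteq> p \<longrightarrow> B (x i) (y j) = 0))"
    and ppc: "\<forall>i1\<in>{1..m}. \<forall>i2\<in>{1..m}. \<forall>j\<in>{1..m}. i1 \<noteq> i2 \<longrightarrow> B (x i1) (y j) \<noteq> 0 \<longrightarrow> B (x i2) (y j) = 0"
    using pp unfolding pperm_def by auto
  show ?thesis
  proof (rule exI[of _ w], rule exI[of _ x], rule exI[of _ y], intro conjI)
    show "inj_on w {1..k - m}" "\<not> dependent (w ` {1..k - m})" using w km by auto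
    show "span (w ` {1..k - m}) = X \<inter> Y" using w km W_def by simp
    show "X = span (x ` {1..m} \<union> w ` {1..k - m})" using spw hx[of m] A0 by simp
    show "Y = span (y ` {1..m} \<union> w ` {1..k - m})" using spw hy[of 1] Cm by simp
    show "\<forall>i\<le>m. P ! i = span (x ` {1..m - i} \<union> y ` {m - i + 1..m} \<union> w ` {1..k - m})"
    proof (intro allI impI)
      fix i assume i: "i \<le> m"
      have "P ! i = span (A i \<union> C i)" using gs[OF i] by simp
      also have "A i = span (x ` {1..m - i} \<union> W)" using hx[of "m - i"] i by simp
      also have "C i = span (y ` {m - i + 1..m} \<union> W)" using hy[of "m - i + 1"] i by simp
      also have "span (span (x ` {1..m - i} \<union> W) \<union> span (y ` {m - i + 1..m} \<union> W)) =
                 span ((x ` {1..m - i} \<union> y ` {m - i + 1..m}) \<union> W)"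
        by (simp add: span_two Un_ac)
      also have "\<dots> = span (x ` {1..m - i} \<union> y ` {m - i + 1..m} \<union> w ` {1..k - m})"
        using spw by simp
      finally show "P ! i = span (x ` {1..m - i} \<union> y ` {m - i + 1..m} \<union> w ` {1..k - m})" .
    qed
    show "\<forall>i j. 1 \<le> i \<and> i \<le> j \<and> j \<le> m \<longrightarrow> B (x i) (y j) = 0" using zero by blast
    show "\<forall>i\<in>{2..m}. (\<forall>j\<in>{1..<i}. B (x i) (y j) = 0) \<or>
                (\<exists>!i'. i' \<in> {1..<i} \<and> B (x i) (y i') = 1 \<and>
                   (\<forall>j\<in>{1..<i}. j \<noteq> i' \<longrightarrow> B (x i) (y j) = 0))"
    proof
      fix i assume i: "i \<in> {2..m}"
      hence i1: "i \<in> {1..m}" by auto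
      show "(\<forall>j\<in>{1..<i}. B (x i) (y j) = 0) \<or>
                (\<exists>!i'. i' \<in> {1..<i} \<and> B (x i) (y i') = 1 \<and>
                   (\<forall>j\<in>{1..<i}. j \<noteq> i' \<longrightarrow> B (x i) (y j) = 0))"
      proof (cases "\<forall>j\<in>{1..m}. B (x i) (y j) = 0")
        case True thus ?thesis using i by auto
      next
        case False
        then obtain p where p: "p \<in> {1..m}" "B (x i) (y p) = 1" "\<forall>j\<in>{1..m}. j \<noteq> p \<longrightarrow> B (x i) (y j) = 0"
          using ppr i1 by blast
        have "p < i"
        proof (rule ccontr)
          assume "\<not> p < i"
          hence "B (x i) (y p) = 0" using zero[of i p] i p(1) by auto
          thus False using p(2) by simp
        qed
        hence pi: "p \<in> {1..<i}" using p(1) by auto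
        have "\<exists>!i'. i' \<in> {1..<i} \<and> B (x i) (y i') = 1 \<and> (\<forall>j\<in>{1..<i}. j \<noteq> i' \<longrightarrow> B (x i) (y j) = 0)"
        proof (rule ex1I[of _ p])
          show "p \<in> {1..<i} \<and> B (x i) (y p) = 1 \<and> (\<forall>j\<in>{1..<i}. j \<noteq> p \<longrightarrow> B (x i) (y j) = 0)"
            using pi p i by auto
          fix q assume q: "q \<in> {1..<i} \<and> B (x i) (y q) = 1 \<and> (\<forall>j\<in>{1..<i}. j \<noteq> q \<longrightarrow> B (x i) (y j) = 0)"
          show "q = p"
          proof (rule ccontr)
            assume "q \<noteq> p"
            hence "B (x i) (y q) = 0" using p(3) q i by auto
            thus False using q by simp
          qed
        qed
        thus ?thesis by blast
      qed
    qed
    show "\<forall>i1 i2 i1' i2'. i1 \<in> {2..m} \<and> i2 \<in> {2..m} \<and> i1 \<noteq> i2 \<and>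
                i1' \<in> {1..<i1} \<and> B (x i1) (y i1') = 1 \<and>
                (\<forall>j\<in>{1..<i1}. j \<noteq> i1' \<longrightarrow> B (x i1) (y j) = 0) \<and>
                i2' \<in> {1..<i2} \<and> B (x i2) (y i2') = 1 \<and>
                (\<forall>j\<in>{1..<i2}. j \<noteq> i2' \<longrightarrow> B (x i2) (y j) = 0) \<longrightarrow> i1' \<noteq> i2'"
    proof (intro allI impI)
      fix i1 i2 i1' i2'
      assume h: "i1 \<in> {2..m} \<and> i2 \<in> {2..m} \<and> i1 \<noteq> i2 \<and>
                i1' \<in> {1..<i1} \<and> B (x i1) (y i1') = 1 \<and>
                (\<forall>j\<in>{1..<i1}. j \<noteq> i1' \<longrightarrow> B (x i1) (y j) = 0) \<and>
                i2' \<in> {1..<i2} \<and> B (x i2) (y i2') = 1 \<and>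
                (\<forall>j\<in>{1..<i2}. j \<noteq> i2' \<longrightarrow> B (x i2) (y j) = 0)"
      show "i1' \<noteq> i2'"
      proof
        assume eq: "i1' = i2'"
        have "i1 \<in> {1..m}" "i2 \<in> {1..m}" "i1' \<in> {1..m}" using h by auto
        moreover have "B (x i1) (y i1') \<noteq> 0" using h by simp
        ultimately have "B (x i2) (y i1') = 0" using ppc h by blast
        thus False using h eq by simp
      qed
    qed
  qed
qed

end

context fsw begin

lemma dim_hyper_int:
  assumes sS: "subspace S" and sH: "subspace H" and sX0: "subspace X0" and SX0: "S \<subseteq> X0" and HX0: "H \<subseteq> X0"
    and dX0: "dim X0 = k" and dH: "dim H + 1 = k"
  shows "dim S \<le> dim (S \<inter> H) + 1"
proof -
  have g: "dim (span (S \<union> H)) + dim (S \<inter> H) = dim S + dim H" by (rule dim_sum_int[OF sS sH])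
  have "span (S \<union> H) \<subseteq> X0" using SX0 HX0 sX0 by (intro span_minimal) auto
  hence "dim (span (S \<union> H)) \<le> k" using dim_le dX0 by metis
  thus ?thesis using g dH by linarith
qed

lemma dim_psub: "subspace S \<Longrightarrow> subspace T \<Longrightarrow> S \<subseteq> T \<Longrightarrow> v \<in> T \<Longrightarrow> v \<notin> S \<Longrightarrow> dim S < dim T"
  by (metis dim_le le_neq_implies_less order_refl sub_eq_dim)

lemma span_gen_orth:
  assumes "\<And>g h. g \<in> SU \<Longrightarrow> h \<in> SV \<Longrightarrow> B g h = 0"
  shows "span SU \<subseteq> perp B (span SV)"
proof -
  have "SV \<subseteq> perp B SU" using assms unfolding perp_def by auto
  hence "span SV \<subseteq> perp B SU" by (intro span_minimal subspace_perp)
  hence "span SV \<subseteq> perp B (span SU)" using perp_span by simp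
  hence "SU \<subseteq> perp B (span SV)" using span_superset[of SU] B_refl unfolding perp_def by blast
  thus ?thesis by (intro span_minimal subspace_perp)
qed

end

context fsw begin

lemma struct2:
  assumes X: "vert X" and Y: "vert Y" and o: "opposite B X Y"
    and g: "walk P X Y" and len: "length P = Suc (Suc m)" and m: "m = k - dim (X \<inter> Y)"
  shows "\<exists>w x y :: nat \<Rightarrow> 'v.
             inj_on w {1..k - m} \<and> \<not> dependent (w ` {1..k - m}) \<and>
             span (w ` {1..k - m}) = X \<inter> Y \<and>
             X = span (x ` {1..m} \<union> w ` {1..k - m}) \<and>
             Y = span (y ` {1..m} \<union> w ` {1..k - m}) \<and>
             P ! 0 = X \<and>
             (\<forall>i\<le>m. P ! Suc i = span
                  (x ` {0..<m - i} \<union> y ` {m - i + 1..m} \<union> w ` {1..k - m})) \<and>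
             (\<forall>i j. i < j \<and> j \<le> m \<longrightarrow> B (x i) (y j) = 0) \<and>
             (\<forall>i\<in>{1..m}. B (x i) (y i) = 1) \<and>
             (\<forall>i j. 1 \<le> j \<and> j < i \<and> i \<le> m \<longrightarrow> B (x i) (y j) = 0)"
proof -
  define W where "W = X \<inter> Y"
  have XY: "X \<noteq> Y" using o unfolding opposite_def by auto
  have sX: "subspace X" and sY: "subspace Y" using X Y vert_sub by auto
  have sgX: "sing X" and sgY: "sing Y" using X Y vert_sing by auto
  have dXk: "dim X = k" "dim Y = k" using X Y vert_dim by auto
  have sW: "subspace W" unfolding W_def using sX sY by (simp add: subspace_inter)
  have dWk: "dim W < k" unfolding W_def by (rule dim_lt_k[OF X Y XY])
  have km: "k - m = dim W" and m1: "1 \<le> m" and mW: "m + dim W = k" using m dWk W_def by auto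
  have e0: "P ! 0 = X" and eY: "P ! Suc m = Y" using walk_ends[OF g] len by auto
  define X0 where "X0 = P ! 1"
  have aX0: "adj X X0" using walk_adj[OF g, of 0] len e0 X0_def by simp
  define Q where "Q = drop 1 P"
  have wQ: "walk Q X0 Y" unfolding Q_def X0_def using walk_drop[OF g, of 1] len by simp
  have lQ: "length Q = Suc m" unfolding Q_def using len by simp
  have Qi: "Q ! i = P ! Suc i" if "i \<le> m" for i unfolding Q_def using that len by simp
  have vX0: "vert X0" using adj_vert[OF aX0] by simp
  have sX0: "subspace X0" and sgX0: "sing X0" and dX0: "dim X0 = k" using vX0 vert_sub vert_sing vert_dim by auto
  have X0Y: "X0 \<inter> Y = W"
  proof -
    have sub: "X0 \<inter> Y \<subseteq> W" using opp_nb[OF o aX0] W_def by simp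
    have "k \<le> dim (X0 \<inter> Y) + (length Q - 1)" by (rule walk_lower[OF wQ])
    hence "dim W \<le> dim (X0 \<inter> Y)" using lQ mW by simp
    thus ?thesis by (intro sub_eq_dim[OF _ sW sub]) (use sX0 sY in \<open>simp add: subspace_inter\<close>)
  qed
  have mk0: "m + dim (X0 \<inter> Y) = k" using X0Y mW by simp
  define A where "A i = Q ! i \<inter> X0" for i
  define C where "C i = Q ! i \<inter> Y" for i
  have gs: "X0 \<inter> Y \<subseteq> Q ! i \<and> dim (A i) + i = k \<and> dim (C i) + (m - i) = k \<and> Q ! i = span (A i \<union> C i)"
    if "i \<le> m" for i unfolding A_def C_def by (rule geo_struct[OF wQ lQ mk0 that])
  have flA: "A j \<subseteq> A i" and flC: "C i \<subseteq> C j" if "i \<le> j" "j \<le> m" for i j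
    using geo_flags[OF wQ lQ mk0 that] unfolding A_def C_def by auto
  have vQ: "vert (Q ! i)" if "i \<le> m" for i using walk_vert[OF wQ] lQ that by simp
  have sA: "subspace (A i)" and sC: "subspace (C i)" if "i \<le> m" for i
    unfolding A_def C_def using vQ[OF that] sX0 sY vert_sub by (auto simp: subspace_inter)
  have eQ0: "Q ! 0 = X0" and eQm: "Q ! m = Y" using walk_ends[OF wQ] lQ by auto
  have A0: "A 0 = X0" and Am: "A m = W" and C0: "C 0 = W" and Cm: "C m = Y"
    unfolding A_def C_def using eQ0 eQm X0Y by auto
  have AX0: "A i \<subseteq> X0" for i unfolding A_def by auto
  have dA: "dim (A i) + i = k" and dC: "dim (C i) + (m - i) = k" if "i \<le> m" for i using gs[OF that] by auto
  define H where "H = X \<inter> X0"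
  have sH: "subspace H" unfolding H_def using sX sX0 by (simp add: subspace_inter)
  have dH: "dim H + 1 = k" unfolding H_def using adj_char[OF aX0] by simp
  have "W \<subseteq> X" unfolding W_def by auto
  moreover have "W \<subseteq> X0" using X0Y by auto
  ultimately have WH: "W \<subseteq> H" unfolding H_def by auto
  have HX: "H \<subseteq> X" and HX0: "H \<subseteq> X0" unfolding H_def by auto
  have ex1: "\<exists>v. v \<in> A (m - 1) \<and> v \<notin> W"
  proof (rule ccontr)
    assume "\<not> ?thesis"
    hence "A (m - 1) \<subseteq> W" by auto
    hence "dim (A (m - 1)) \<le> dim W" by (rule dim_le)
    thus False using dA[of "m - 1"] m1 mW by simp
  qed
  define v1 where "v1 = (SOME v. v \<in> A (m - 1) \<and> v \<notin> W)"
  have v1: "v1 \<in> A (m - 1)" "v1 \<notin> W" using someI_ex[OF ex1] v1_def by auto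
  have v1X: "v1 \<notin> X"
  proof
    assume v1X: "v1 \<in> X"
    have "Suc (m - 1) < length Q" using lQ m1 by simp
    hence a: "adj (Q ! (m - 1)) (Q ! Suc (m - 1))" by (rule walk_adj[OF wQ])
    have "Q ! Suc (m - 1) = Y" using eQm m1 by simp
    hence "orth (Q ! (m - 1)) Y" using adj_char[OF a] by simp
    moreover have "v1 \<in> Q ! (m - 1)" using v1 A_def by auto
    ultimately have "v1 \<in> perp B Y" unfolding orth_def using in_perp' by blast
    hence "v1 \<in> X \<inter> Y" using opp_sym[OF X Y o] v1X by blast
    thus False using v1 W_def by simp
  qed
  have exj: "\<exists>v. v \<in> A (m - j) \<and> v \<in> X \<and> v \<notin> A (m - (j - 1))" if j: "2 \<le> j" "j \<le> m" for j
  proof (rule ccontr)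
    assume "\<not> ?thesis"
    hence sub: "A (m - j) \<inter> X \<subseteq> A (m - (j - 1)) \<inter> X" by auto
    have s1: "subspace (A (m - j) \<inter> X)" "subspace (A (m - (j - 1)) \<inter> X)" using sA sX by (auto simp: subspace_inter)
    have d1: "dim (A (m - j)) \<le> dim (A (m - j) \<inter> H) + 1"
      by (rule dim_hyper_int[OF sA sH sX0 AX0 HX0 dX0 dH]) simp
    have "A (m - j) \<inter> H = A (m - j) \<inter> X" using AX0 H_def by auto
    hence d1': "dim (A (m - j)) \<le> dim (A (m - j) \<inter> X) + 1" using d1 by simp
    have jj: "m - (j - 1) \<le> m - 1" "m - 1 \<le> m" using j by auto
    have "v1 \<in> A (m - (j - 1))" using v1(1) flA[OF jj] by blast
    hence "dim (A (m - (j - 1)) \<inter> X) < dim (A (m - (j - 1)))"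
      by (intro dim_psub[OF s1(2) sA]) (use v1X j in auto)
    moreover have "dim (A (m - j) \<inter> X) \<le> dim (A (m - (j - 1)) \<inter> X)" using dim_le[OF sub] .
    moreover have "dim (A (m - (j - 1))) + 1 = dim (A (m - j))"
    proof -
      have h1: "dim (A (m - j)) + (m - j) = k" using dA[of "m - j"] j by simp
      have h2: "dim (A (m - (j - 1))) + (m - (j - 1)) = k" using dA[of "m - (j - 1)"] j by simp
      have h3: "m - (j - 1) = (m - j) + 1" using j by simp
      show ?thesis using h1 h2 h3 by linarith
    qed
    ultimately show False using d1' by linarith
  qed
  define xv where "xv j = (if j = 1 then v1 else SOME v. v \<in> A (m - j) \<and> v \<in> X \<and> v \<notin> A (m - (j - 1)))" for j
  have xvj: "xv j \<in> A (m - j) \<and> xv j \<in> X \<and> xv j \<notin> A (m - (j - 1))" if "2 \<le> j" "j \<le> m" for j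
    using someI_ex[OF exj[OF that]] that unfolding xv_def by auto
  have xv1: "xv 1 = v1" unfolding xv_def by simp
  define Gu where "Gu j = A (m - j)" for j
  have Gu_sub: "subspace (Gu j)" if "j \<le> m" for j unfolding Gu_def using sA by simp
  have Gu_mono: "Gu j \<subseteq> Gu (Suc j)" if "j < m" for j unfolding Gu_def using flA that by simp
  have Gu_dim: "dim (Gu j) = dim (Gu 0) + j" if "j \<le> m" for j
  proof -
    have h1: "dim (A (m - j)) + (m - j) = k" using dA[of "m - j"] that by simp
    have h2: "dim (A m) + m = k" using dA[of m] by simp
    show ?thesis unfolding Gu_def using h1 h2 that by simp
  qed
  have xvG: "\<forall>j\<in>{1..m}. xv j \<in> Gu j \<and> xv j \<notin> Gu (j - 1)"
  proof
    fix j assume j: "j \<in> {1..m}"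
    show "xv j \<in> Gu j \<and> xv j \<notin> Gu (j - 1)"
    proof (cases "j = 1")
      case True thus ?thesis using v1 xv1 Am unfolding Gu_def by simp
    next
      case False thus ?thesis using xvj[of j] j unfolding Gu_def by auto
    qed
  qed
  have xspan: "span (xv ` {1..j} \<union> W) = A (m - j)" if "j \<le> m" for j
    using flag_up[OF Gu_sub Gu_mono Gu_dim, where v = xv] xvG that Am unfolding Gu_def by simp
  have HH: "span (xv ` {2..m} \<union> W) = H"
  proof (rule sub_eq_dim[OF subspace_span sH])
    have "xv ` {2..m} \<subseteq> H"
    proof
      fix v assume "v \<in> xv ` {2..m}"
      then obtain j where j: "j \<in> {2..m}" "v = xv j" by auto
      thus "v \<in> H" using xvj[of j] AX0 H_def by auto
    qed
    thus "span (xv ` {2..m} \<union> W) \<subseteq> H" using WH sH by (intro span_minimal) auto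
    have e: "xv ` {1..m} \<union> W = insert v1 (xv ` {2..m} \<union> W)"
    proof -
      have "{1..m} = insert 1 {2..m}" using m1 by auto
      thus ?thesis using xv1 by auto
    qed
    have "k = dim (span (xv ` {1..m} \<union> W))" using xspan[of m] A0 dX0 by simp
    also have "\<dots> = dim (insert v1 (xv ` {2..m} \<union> W))" unfolding e by simp
    also have "\<dots> \<le> dim (xv ` {2..m} \<union> W) + 1" using fd.dim_insert by simp
    finally show "dim H \<le> dim (span (xv ` {2..m} \<union> W))" using dH by simp
  qed
  have "\<not> X \<subseteq> H"
  proof
    assume "X \<subseteq> H" hence "dim X \<le> dim H" by (rule dim_le)
    thus False using dXk dH by simp
  qed
  then obtain xm where xm: "xm \<in> X" "xm \<notin> H" by auto
  have Xspan: "span (insert xm H) = X"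
  proof (rule sub_eq_dim[OF subspace_span sX])
    show "span (insert xm H) \<subseteq> X" using xm HX sX by (intro span_minimal) auto
    show "dim X \<le> dim (span (insert xm H))" using dim_insert_notin[OF sH xm(2)] dH dXk by simp
  qed
  define r where "r i = (if i = m then xm else xv (Suc i))" for i
  have rX: "r i \<in> X" if "i \<in> {1..m}" for i
    using that xm xvj[of "Suc i"] unfolding r_def by auto
  define Gd where "Gd j = C (Suc m - j)" for j
  have Gd_sub: "subspace (Gd j)" if "1 \<le> j" "j \<le> Suc m" for j unfolding Gd_def using sC that by simp
  have Gd_mono: "Gd (Suc j) \<subseteq> Gd j" if "1 \<le> j" "j \<le> m" for j unfolding Gd_def using flC that by simp
  have Gd_dim: "dim (Gd j) + j = dim (Gd (Suc m)) + Suc m" if "1 \<le> j" "j \<le> Suc m" for j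
  proof -
    have h1: "dim (C (Suc m - j)) + (m - (Suc m - j)) = k" using dC[of "Suc m - j"] that by simp
    have h2: "dim (C 0) + m = k" using dC[of 0] by simp
    show ?thesis unfolding Gd_def using h1 h2 that by simp
  qed
  obtain yv where yv: "\<forall>j\<in>{1..m}. yv j \<in> Gd j \<and> yv j \<notin> Gd (Suc j)"
    using flag_choose_down[OF Gd_mono Gd_dim] by blast
  have yspan: "span (yv ` {j..m} \<union> W) = C (Suc m - j)" if "1 \<le> j" "j \<le> Suc m" for j
    using flag_down[OF Gd_sub Gd_mono Gd_dim, where v = yv] yv that C0 unfolding Gd_def by simp
  obtain r' y where rt: "rowtri r r' m" and ct: "coltri yv y m" and pp: "pperm r' y m m"
    using normal_form by blast
  define x where "x i = (if i = 0 then v1 else r' i)" for i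
  have hy: "span (y ` {j..m} \<union> W) = C (Suc m - j)" if "1 \<le> j" "j \<le> Suc m" for j
    using coltri_span[OF ct that] yspan[OF that] by simp
  have r'X: "r' i \<in> X" if "i \<in> {1..m}" for i
  proof -
    have "r' i \<in> span (r ` {1..i})" by (rule rowtri_in[OF rt that])
    moreover have "span (r ` {1..i}) \<subseteq> X" using rX that sX by (intro span_minimal) auto
    ultimately show ?thesis by blast
  qed
  have spX: "span (r' ` {1..i} \<union> W) \<subseteq> X" if "i \<le> m" for i
    using r'X that sX W_def by (intro span_minimal) auto
  have rxv: "r ` {1..i} = xv ` {2..Suc i}" if "i < m" for i
  proof
    show "r ` {1..i} \<subseteq> xv ` {2..Suc i}"
    proof
      fix v assume "v \<in> r ` {1..i}"
      then obtain j where j: "j \<in> {1..i}" "v = r j" by auto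
      hence "v = xv (Suc j)" using that unfolding r_def by auto
      moreover have "Suc j \<in> {2..Suc i}" using j by auto
      ultimately show "v \<in> xv ` {2..Suc i}" by blast
    qed
    show "xv ` {2..Suc i} \<subseteq> r ` {1..i}"
    proof
      fix v assume "v \<in> xv ` {2..Suc i}"
      then obtain l where l: "l \<in> {2..Suc i}" "v = xv l" by auto
      hence "r (l - 1) = v" using that unfolding r_def by auto
      moreover have "l - 1 \<in> {1..i}" using l by auto
      ultimately show "v \<in> r ` {1..i}" by blast
    qed
  qed
  have hxA: "span (x ` {0..<j} \<union> W) = A (m - j)" if "j \<le> m" for j
  proof (cases "j = 0")
    case True thus ?thesis using Am sW by (simp add: span_eq_iff)
  next
    case False
    have e1: "x ` {0..<j} \<union> W = r' ` {1..j - 1} \<union> insert v1 W"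
    proof -
      have "{0..<j} = insert 0 {1..j - 1}" using False by auto
      hence "x ` {0..<j} = insert v1 (x ` {1..j - 1})" unfolding x_def by auto
      moreover have "x ` {1..j - 1} = r' ` {1..j - 1}" unfolding x_def by (intro image_cong) auto
      ultimately show ?thesis by auto
    qed
    have "span (x ` {0..<j} \<union> W) = span (r ` {1..j - 1} \<union> insert v1 W)"
      unfolding e1 by (rule rowtri_span[OF rt]) (use that in simp)
    also have "r ` {1..j - 1} \<union> insert v1 W = xv ` {1..j} \<union> W"
    proof -
      have "r ` {1..j - 1} = xv ` {2..j}" using rxv[of "j - 1"] that False by simp
      moreover have "{1..j} = insert 1 {2..j}" using False by auto
      ultimately show ?thesis using xv1 by auto
    qed
    also have "span \<dots> = A (m - j)" by (rule xspan[OF that])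
    finally show ?thesis .
  qed
  have hX: "span (x ` {1..m} \<union> W) = X"
  proof -
    have "x ` {1..m} = r' ` {1..m}" unfolding x_def by (intro image_cong) auto
    hence "span (x ` {1..m} \<union> W) = span (r ` {1..m} \<union> W)" using rowtri_span[OF rt le_refl] by simp
    also have "r ` {1..m} \<union> W = insert xm (xv ` {2..m} \<union> W)"
    proof -
      have "{1..m} = insert m {1..m - 1}" using m1 by auto
      hence "r ` {1..m} = insert xm (r ` {1..m - 1})" unfolding r_def by auto
      moreover have "r ` {1..m - 1} = xv ` {2..m}" using rxv[of "m - 1"] m1 by simp
      ultimately show ?thesis by auto
    qed
    also have "span \<dots> = span (insert xm (span (xv ` {2..m} \<union> W)))"
      by (rule span_insert_cong) (simp add: span_span)
    also have "\<dots> = X" using HH Xspan by simp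
    finally show ?thesis .
  qed
  obtain w where w: "inj_on w {1..dim W}" "\<not> dependent (w ` {1..dim W})" "span (w ` {1..dim W}) = W"
    using basis_enum[OF sW] by blast
  have spw: "span (S \<union> w ` {1..k - m}) = span (S \<union> W)" for S
    using span_Un_span[of S "w ` {1..dim W}"] w(3) km by simp
  have xin: "x i \<in> A (m - Suc i)" if "i < m" for i
  proof -
    have "x i \<in> span (x ` {0..<Suc i} \<union> W)" by (intro span_base) auto
    thus ?thesis using hxA[of "Suc i"] that by simp
  qed
  have yin: "y j \<in> C (Suc m - j)" if "j \<in> {1..m}" for j
  proof -
    have "y j \<in> span (y ` {j..m} \<union> W)" using that by (intro span_base) auto
    thus ?thesis using hy[of j] that by simp
  qed
  have zero: "B (x i) (y j) = 0" if "i < j" "j \<le> m" for i j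
  proof -
    have a: "adj (Q ! (m - j)) (Q ! Suc (m - j))" using walk_adj[OF wQ] lQ that by simp
    have ij: "m - j \<le> m - Suc i" "m - Suc i \<le> m" using that by auto
    have "x i \<in> A (m - Suc i)" using xin that by simp
    hence "x i \<in> A (m - j)" using flA[OF ij] by blast
    hence xi: "x i \<in> Q ! (m - j)" unfolding A_def by simp
    have "y j \<in> C (Suc (m - j))" using yin[of j] that by (simp add: Suc_diff_le)
    hence yj: "y j \<in> Q ! Suc (m - j)" unfolding C_def by simp
    show ?thesis using adj_char[OF a] xi yj unfolding orth_def by blast
  qed
  have ppr: "\<forall>i\<in>{1..m}. (\<forall>j\<in>{1..m}. B (r' i) (y j) = 0) \<or>
       (\<exists>p\<in>{1..m}. B (r' i) (y p) = 1 \<and> (\<forall>j\<in>{1..m}. j \<noteq> p \<longrightarrow> B (r' i) (y j) = 0))"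
    using pp unfolding pperm_def by auto
  have diag: "B (r' i) (y i) \<noteq> 0" if i: "i \<in> {1..m}" for i
  proof
    assume z: "B (r' i) (y i) = 0"
    define U where "U = span (r' ` {1..i} \<union> W)"
    define V where "V = span (y ` {i..m} \<union> W)"
    have VC: "V = C (Suc m - i)" unfolding V_def using hy[of i] i by simp
    have sV: "subspace V" unfolding V_def by simp
    have UX: "U \<subseteq> X" unfolding U_def using spX i by simp
    have UV: "U \<subseteq> perp B V" unfolding U_def V_def
    proof (rule span_gen_orth)
      fix g h assume g: "g \<in> r' ` {1..i} \<union> W" and h: "h \<in> y ` {i..m} \<union> W"
      show "B g h = 0"
      proof (cases "g \<in> W")
        case True
        have "g \<in> Y" using True W_def by auto
        moreover have "h \<in> Y"
        proof (cases "h \<in> W")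
          case True thus ?thesis using W_def by auto
        next
          case False
          then obtain j where j: "j \<in> {i..m}" "h = y j" using h by auto
          thus ?thesis using yin[of j] i C_def by auto
        qed
        ultimately show ?thesis using sgY unfolding sing_eq by auto
      next
        case False
        then obtain a where a: "a \<in> {1..i}" "g = r' a" using g by auto
        show ?thesis
        proof (cases "h \<in> W")
          case True
          have "g \<in> X" using a r'X i by auto
          thus ?thesis using True W_def sgX unfolding sing_eq by auto
        next
          case False
          then obtain j where j: "j \<in> {i..m}" "h = y j" using h by auto
          show ?thesis
          proof (cases "a = j")
            case True thus ?thesis using a j z by auto
          next
            case False
            hence "a < j" using a j by auto
            hence "B (x a) (y j) = 0" using zero j by auto
            thus ?thesis using a j unfolding x_def by auto
          qed
        qed
      qed
    qed
    have UXV: "U \<subseteq> X \<inter> perp B V" using UX UV by auto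
    have r: "dim V + dim (X \<inter> perp B V) = dim X + dim (V \<inter> perp B X)" by (rule rank[OF sX sV])
    have "V \<inter> perp B X = W"
    proof
      have "V \<subseteq> Y" using VC C_def by auto
      hence "V \<inter> perp B X \<subseteq> Y \<inter> perp B X" by auto
      also have "\<dots> = W" using o W_def unfolding opposite_def by auto
      finally show "V \<inter> perp B X \<subseteq> W" .
      have "W \<subseteq> V" unfolding V_def using span_superset by blast
      moreover have "W \<subseteq> perp B X" using sgX W_def unfolding sing_eq perp_def by auto
      ultimately show "W \<subseteq> V \<inter> perp B X" by auto
    qed
    hence dXV: "dim V + dim (X \<inter> perp B V) = k + dim W" using r dXk by simp
    have dV: "dim V + i = k + 1"
    proof -
      have "Suc m - i \<le> m" using i by auto
      hence h1: "dim (C (Suc m - i)) + (m - (Suc m - i)) = k" by (rule dC)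
      have h2: "m - (Suc m - i) = i - 1" using i by auto
      have h3: "dim (C (Suc m - i)) + (i - 1) = k" using h1 h2 by simp
      have "1 \<le> i" using i by simp
      thus ?thesis unfolding VC using h3 by linarith
    qed
    have dU: "dim U = dim W + i"
    proof (cases "i = m")
      case True
      have "x ` {1..m} = r' ` {1..m}" unfolding x_def by (intro image_cong) auto
      hence "U = X" using hX True U_def by simp
      thus ?thesis using dXk True mW by simp
    next
      case False
      hence im: "i < m" using i by auto
      have "x ` {0..<Suc i} \<union> W = insert v1 (r' ` {1..i} \<union> W)"
      proof -
        have "{0..<Suc i} = insert 0 {1..i}" by auto
        hence "x ` {0..<Suc i} = insert v1 (x ` {1..i})" unfolding x_def by auto
        moreover have "x ` {1..i} = r' ` {1..i}" unfolding x_def by (intro image_cong) auto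
        ultimately show ?thesis by auto
      qed
      hence "A (m - Suc i) = span (insert v1 (r' ` {1..i} \<union> W))" using hxA[of "Suc i"] im by simp
      moreover have "v1 \<notin> span (r' ` {1..i} \<union> W)" using spX[of i] im v1X by auto
      ultimately have "dim (A (m - Suc i)) = dim U + 1" using fd.dim_insert U_def by simp
      thus ?thesis using dA[of "m - Suc i"] im mW by simp
    qed
    have "dim U \<le> dim (X \<inter> perp B V)" using dim_le[OF UXV] .
    thus False using dXV dV dU by linarith
  qed
  have ident: "B (r' i) (y i) = 1 \<and> (\<forall>j\<in>{1..m}. j \<noteq> i \<longrightarrow> B (r' i) (y j) = 0)" if i: "i \<in> {1..m}" for i
  proof -
    obtain p where p: "p \<in> {1..m}" "B (r' i) (y p) = 1" "\<forall>j\<in>{1..m}. j \<noteq> p \<longrightarrow> B (r' i) (y j) = 0"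
      using ppr diag[OF i] i by blast
    have "p = i" using p(3) diag[OF i] i by auto
    thus ?thesis using p by simp
  qed
  show ?thesis
  proof (rule exI[of _ w], rule exI[of _ x], rule exI[of _ y], intro conjI)
    show "inj_on w {1..k - m}" "\<not> dependent (w ` {1..k - m})" using w km by auto
    show "span (w ` {1..k - m}) = X \<inter> Y" using w km W_def by simp
    show "X = span (x ` {1..m} \<union> w ` {1..k - m})" using spw hX by simp
    show "Y = span (y ` {1..m} \<union> w ` {1..k - m})" using spw hy[of 1] Cm by simp
    show "P ! 0 = X" by (rule e0)
    show "\<forall>i\<le>m. P ! Suc i = span (x ` {0..<m - i} \<union> y ` {m - i + 1..m} \<union> w ` {1..k - m})"
    proof (intro allI impI)
      fix i assume i: "i \<le> m"
      have "P ! Suc i = span (A i \<union> C i)" using gs[OF i] Qi[OF i] by simp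
      also have "A i = span (x ` {0..<m - i} \<union> W)" using hxA[of "m - i"] i by simp
      also have "C i = span (y ` {m - i + 1..m} \<union> W)" using hy[of "m - i + 1"] i by simp
      also have "span (span (x ` {0..<m - i} \<union> W) \<union> span (y ` {m - i + 1..m} \<union> W)) =
                 span ((x ` {0..<m - i} \<union> y ` {m - i + 1..m}) \<union> W)"
        by (simp add: span_two Un_ac)
      also have "\<dots> = span (x ` {0..<m - i} \<union> y ` {m - i + 1..m} \<union> w ` {1..k - m})"
        using spw by simp
      finally show "P ! Suc i = span (x ` {0..<m - i} \<union> y ` {m - i + 1..m} \<union> w ` {1..k - m})" .
    qed
    show "\<forall>i j. i < j \<and> j \<le> m \<longrightarrow> B (x i) (y j) = 0" using zero by blast
    show "\<forall>i\<in>{1..m}. B (x i) (y i) = 1" using ident unfolding x_def by auto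
    show "\<forall>i j. 1 \<le> j \<and> j < i \<and> i \<le> m \<longrightarrow> B (x i) (y j) = 0"
    proof (intro allI impI)
      fix i j assume h: "1 \<le> j \<and> j < i \<and> i \<le> m"
      hence "i \<in> {1..m}" "j \<in> {1..m}" "j \<noteq> i" by auto
      hence "B (r' i) (y j) = 0" using ident by blast
      thus "B (x i) (y j) = 0" using h unfolding x_def by auto
    qed
  qed
qed

end

context fsw begin

lemma sv0: "sv 0"
proof -
  obtain M where M: "sing M" "dim M = \<omega>" using ex_max by blast
  have "0 \<in> M" using sing_subspace[OF M(1)] by (rule subspace_0)
  thus ?thesis using sing_sv[OF M(1)] by blast
qed

lemma sing0: "sing {0}"
  unfolding sing_eq using sv0 by simp

lemma exists_vert: "\<exists>X. vert X"
proof -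
  obtain M where M: "sing M" "dim M = \<omega>" using ex_max by blast
  have sM: "subspace M" using M sing_subspace by auto
  have "{0} \<subseteq> M" using subspace_0[OF sM] by auto
  moreover have "dim {0} \<le> k" "k \<le> dim M" using M k\<omega> by auto
  ultimately obtain H where H: "subspace H" "H \<subseteq> M" "dim H = k"
    using intermediate[OF subspace_single_0 sM] by blast
  have "sing H" by (rule sing_sub[OF M(1) H(1) H(2)])
  thus ?thesis using H unfolding pg_vertex_def by blast
qed

lemma antipodal: "\<exists>U U'. vert U \<and> vert U' \<and> opposite B U U' \<and> dim (U \<inter> U') = 0"
proof -
  obtain X where X: "vert X" using exists_vert by blast
  have sX: "subspace X" and sgX: "sing X" and dX: "dim X = k" using X vert_sub vert_sing vert_dim by auto
  have build: "j \<le> k \<Longrightarrow> \<exists>Yj. sing Yj \<and> dim Yj = j \<and> Yj \<inter> perp B X \<subseteq> {0}" for j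
  proof (induction j)
    case 0 thus ?case using sing0 by (intro exI[of _ "{0}"]) simp
  next
    case (Suc j)
    then obtain Yj where Yj: "sing Yj" "dim Yj = j" "Yj \<inter> perp B X \<subseteq> {0}" by auto
    have sYj: "subspace Yj" using Yj sing_subspace by auto
    have r: "dim X + dim (Yj \<inter> perp B X) = dim Yj + dim (X \<inter> perp B Yj)" by (rule rank[OF sYj sX])
    have d0: "dim (Yj \<inter> perp B X) = 0" using Yj(3) by simp
    have dXY: "dim (X \<inter> perp B Yj) + j = k" using r Yj(2) dX d0 by linarith
    have "\<not> X \<inter> perp B Yj \<subseteq> {0}"
    proof
      assume "X \<inter> perp B Yj \<subseteq> {0}"
      hence d0': "dim (X \<inter> perp B Yj) = 0" by simp
      show False using dXY Suc.prems d0' by linarith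
    qed
    then obtain x where x: "x \<in> X" "x \<in> perp B Yj" "x \<noteq> 0" by auto
    have svx: "sv x" using sing_sv[OF sgX x(1)] .
    have "\<exists>v\<in>perp B Yj. B x v \<noteq> 0"
    proof (rule ccontr)
      assume "\<not> ?thesis"
      hence "x \<in> perp B (perp B Yj)" using B_refl unfolding perp_def by auto
      hence "x \<in> span (Yj \<union> Rad)" using double_perp[OF sYj] by simp
      then obtain u rr where ur: "x = u + rr" "u \<in> span Yj" "rr \<in> span Rad" using span_Un by blast
      have sR: "subspace Rad" unfolding Rad_def by (rule subspace_perp)
      have uY: "u \<in> Yj" using ur(2) spanS[OF sYj] by simp
      have rR: "rr \<in> Rad" using ur(3) spanS[OF sR] by simp
      hence Brr: "B z rr = 0" for z unfolding Rad_def perp_def by auto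
      have "u \<in> perp B X"
        unfolding perp_def
      proof (clarify)
        fix x2 assume x2: "x2 \<in> X"
        have "B x2 x = 0" using sgX x2 x(1) unfolding sing_eq by auto
        moreover have "u = x - rr" using ur(1) by simp
        ultimately show "B x2 u = 0" using Brr by (simp add: B_diff2)
      qed
      hence "u = 0" using Yj(3) uY by auto
      hence "x \<in> Rad" using ur(1) rR by simp
      hence "\<forall>z. B z x = 0" unfolding Rad_def perp_def by auto
      hence "x = 0" using rad svx by blast
      thus False using x(3) by simp
    qed
    then obtain v where v: "v \<in> perp B Yj" "B x v \<noteq> 0" by blast
    obtain c where c: "sv (v + scale c x)" using sv_fix[OF svx v(2)] by blast
    define y where "y = v + scale c x"
    have yP: "y \<in> perp B Yj" unfolding y_def using v(1) x(2) subspace_perp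
      by (simp add: subspace_add subspace_scale)
    have Bxy: "B x y \<noteq> 0" unfolding y_def using v(2) sv_B[OF svx] by (simp add: B_add2 B_scale2)
    have yn: "y \<notin> Yj"
    proof
      assume "y \<in> Yj"
      hence "B y x = 0" using x(2) unfolding perp_def by auto
      thus False using Bxy B_refl by simp
    qed
    define Y' where "Y' = span (insert y Yj)"
    have sgY': "sing Y'" unfolding Y'_def by (rule sing_insert[OF Yj(1)]) (use c yP y_def in auto)
    have dY': "dim Y' = Suc j" unfolding Y'_def using dim_insert_notin[OF sYj yn] Yj(2) by simp
    have "Y' \<inter> perp B X \<subseteq> {0}"
    proof
      fix z assume z: "z \<in> Y' \<inter> perp B X"
      then obtain d where d: "z - scale d y \<in> span Yj" unfolding Y'_def using span_breakdown_eq by blast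
      define u where "u = z - scale d y"
      have uY: "u \<in> Yj" using d spanS[OF sYj] u_def by simp
      have "B x z = 0" using z x(1) unfolding perp_def by auto
      moreover have "B x u = 0" using uY x(2) B_refl unfolding perp_def by auto
      moreover have "z = u + scale d y" using u_def by simp
      ultimately have "\<sigma> d * B x y = 0" by (simp add: B_add2 B_scale2)
      hence "d = 0" using Bxy by simp
      hence "z \<in> Yj" using uY u_def by simp
      thus "z \<in> {0}" using Yj(3) z by auto
    qed
    thus ?case using sgY' dY' by blast
  qed
  obtain Y where Y: "sing Y" "dim Y = k" "Y \<inter> perp B X \<subseteq> {0}" using build[of k] by auto
  have vY: "vert Y" using Y unfolding pg_vertex_def by simp
  have XYp: "X \<inter> Y \<subseteq> perp B X \<inter> Y" using sgX unfolding sing_eq perp_def by auto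
  have z: "perp B X \<inter> Y = {0}" using Y(3) subspace_0[OF sing_subspace[OF Y(1)]] subspace_0[OF subspace_perp] by auto
  have XY0: "X \<inter> Y = {0}" using XYp z subspace_0[OF sX] subspace_0[OF sing_subspace[OF Y(1)]] by auto
  have "X \<noteq> Y"
  proof
    assume "X = Y"
    hence "X = {0}" using XY0 by simp
    thus False using dX k1 by simp
  qed
  hence "opposite B X Y" unfolding opposite_def using z XY0 by simp
  thus ?thesis using X vY XY0 by (intro exI[of _ X] exI[of _ Y]) simp
qed

end

context fsw begin

theorem main:
  assumes X: "pg_vertex t scale B Q k X" and Y: "pg_vertex t scale B Q k Y"
    and XY: "X \<noteq> Y"
    and m_def: "m = k - vector_space.dim scale (X \<inter> Y)"
  shows
   "(\<not> opposite B X Y \<longrightarrow>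
       pg_dist t scale B Q k X Y = m \<and>
       (\<forall>P. pg_geodesic t scale B Q k P X Y \<longrightarrow>
          (\<exists>w x y :: nat \<Rightarrow> 'v.
             inj_on w {1..k - m} \<and> \<not> module.dependent scale (w ` {1..k - m}) \<and>
             module.span scale (w ` {1..k - m}) = X \<inter> Y \<and>
             X = module.span scale (x ` {1..m} \<union> w ` {1..k - m}) \<and>
             Y = module.span scale (y ` {1..m} \<union> w ` {1..k - m}) \<and>
             (\<forall>i\<le>m. P ! i = module.span scale
                  (x ` {1..m - i} \<union> y ` {m - i + 1..m} \<union> w ` {1..k - m})) \<and>
             (\<forall>i j. 1 \<le> i \<and> i \<le> j \<and> j \<le> m \<longrightarrow> B (x i) (y j) = 0) \<and>
             (\<forall>i\<in>{2..m}. (\<forall>j\<in>{1..<i}. B (x i) (y j) = 0) \<or>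
                (\<exists>!i'. i' \<in> {1..<i} \<and> B (x i) (y i') = 1 \<and>
                   (\<forall>j\<in>{1..<i}. j \<noteq> i' \<longrightarrow> B (x i) (y j) = 0))) \<and>
             (\<forall>i1 i2 i1' i2'. i1 \<in> {2..m} \<and> i2 \<in> {2..m} \<and> i1 \<noteq> i2 \<and>
                i1' \<in> {1..<i1} \<and> B (x i1) (y i1') = 1 \<and>
                (\<forall>j\<in>{1..<i1}. j \<noteq> i1' \<longrightarrow> B (x i1) (y j) = 0) \<and>
                i2' \<in> {1..<i2} \<and> B (x i2) (y i2') = 1 \<and>
                (\<forall>j\<in>{1..<i2}. j \<noteq> i2' \<longrightarrow> B (x i2) (y j) = 0) \<longrightarrow> i1' \<noteq> i2'))))
    \<and>
    (opposite B X Y \<longrightarrow>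
       pg_dist t scale B Q k X Y = m + 1 \<and>
       (\<forall>P. pg_geodesic t scale B Q k P X Y \<longrightarrow>
          (\<exists>w x y :: nat \<Rightarrow> 'v.
             inj_on w {1..k - m} \<and> \<not> module.dependent scale (w ` {1..k - m}) \<and>
             module.span scale (w ` {1..k - m}) = X \<inter> Y \<and>
             X = module.span scale (x ` {1..m} \<union> w ` {1..k - m}) \<and>
             Y = module.span scale (y ` {1..m} \<union> w ` {1..k - m}) \<and>
             P ! 0 = X \<and>
             (\<forall>i\<le>m. P ! Suc i = module.span scale
                  (x ` {0..<m - i} \<union> y ` {m - i + 1..m} \<union> w ` {1..k - m})) \<and>
             (\<forall>i j. i < j \<and> j \<le> m \<longrightarrow> B (x i) (y j) = 0) \<and>
             (\<forall>i\<in>{1..m}. B (x i) (y i) = 1) \<and>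
             (\<forall>i j. 1 \<le> j \<and> j < i \<and> i \<le> m \<longrightarrow> B (x i) (y j) = 0))))
    \<and>
    ((\<forall>U U'. pg_vertex t scale B Q k U \<and> pg_vertex t scale B Q k U' \<longrightarrow>
        (\<exists>P. pg_walk t scale B Q k P U U') \<and> pg_dist t scale B Q k U U' \<le> k + 1) \<and>
     (\<exists>U U'. pg_vertex t scale B Q k U \<and> pg_vertex t scale B Q k U' \<and>
        pg_dist t scale B Q k U U' = k + 1))"
proof (intro conjI impI allI)
  assume no: "\<not> opposite B X Y"
  show d: "gdist X Y = m" using dist_nonopp[OF X Y XY no] m_def by simp
  fix P assume "pg_geodesic t scale B Q k P X Y"
  hence g: "walk P X Y" "length P = Suc m" using d unfolding pg_geodesic_def by auto
  show "\<exists>w x y :: nat \<Rightarrow> 'v.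
             inj_on w {1..k - m} \<and> \<not> dependent (w ` {1..k - m}) \<and>
             span (w ` {1..k - m}) = X \<inter> Y \<and>
             X = span (x ` {1..m} \<union> w ` {1..k - m}) \<and>
             Y = span (y ` {1..m} \<union> w ` {1..k - m}) \<and>
             (\<forall>i\<le>m. P ! i = span
                  (x ` {1..m - i} \<union> y ` {m - i + 1..m} \<union> w ` {1..k - m})) \<and>
             (\<forall>i j. 1 \<le> i \<and> i \<le> j \<and> j \<le> m \<longrightarrow> B (x i) (y j) = 0) \<and>
             (\<forall>i\<in>{2..m}. (\<forall>j\<in>{1..<i}. B (x i) (y j) = 0) \<or>
                (\<exists>!i'. i' \<in> {1..<i} \<and> B (x i) (y i') = 1 \<and>
                   (\<forall>j\<in>{1..<i}. j \<noteq> i' \<longrightarrow> B (x i) (y j) = 0))) \<and>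
             (\<forall>i1 i2 i1' i2'. i1 \<in> {2..m} \<and> i2 \<in> {2..m} \<and> i1 \<noteq> i2 \<and>
                i1' \<in> {1..<i1} \<and> B (x i1) (y i1') = 1 \<and>
                (\<forall>j\<in>{1..<i1}. j \<noteq> i1' \<longrightarrow> B (x i1) (y j) = 0) \<and>
                i2' \<in> {1..<i2} \<and> B (x i2) (y i2') = 1 \<and>
                (\<forall>j\<in>{1..<i2}. j \<noteq> i2' \<longrightarrow> B (x i2) (y j) = 0) \<longrightarrow> i1' \<noteq> i2')"
    by (rule struct1[OF X Y XY g m_def])
next
  assume o: "opposite B X Y"
  show d: "gdist X Y = m + 1" using dist_opp[OF X Y o] m_def by simp
  fix P assume "pg_geodesic t scale B Q k P X Y"
  hence g: "walk P X Y" "length P = Suc (Suc m)" using d unfolding pg_geodesic_def by auto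
  show "\<exists>w x y :: nat \<Rightarrow> 'v.
             inj_on w {1..k - m} \<and> \<not> dependent (w ` {1..k - m}) \<and>
             span (w ` {1..k - m}) = X \<inter> Y \<and>
             X = span (x ` {1..m} \<union> w ` {1..k - m}) \<and>
             Y = span (y ` {1..m} \<union> w ` {1..k - m}) \<and>
             P ! 0 = X \<and>
             (\<forall>i\<le>m. P ! Suc i = span
                  (x ` {0..<m - i} \<union> y ` {m - i + 1..m} \<union> w ` {1..k - m})) \<and>
             (\<forall>i j. i < j \<and> j \<le> m \<longrightarrow> B (x i) (y j) = 0) \<and>
             (\<forall>i\<in>{1..m}. B (x i) (y i) = 1) \<and>
             (\<forall>i j. 1 \<le> j \<and> j < i \<and> i \<le> m \<longrightarrow> B (x i) (y j) = 0)"
    by (rule struct2[OF X Y o g m_def])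
next
  fix U U' assume UU: "vert U \<and> vert U'"
  hence U: "vert U" and U': "vert U'" by auto
  show "\<exists>P. walk P U U'"
  proof (cases "U = U'")
    case True thus ?thesis using walk_single[OF U] by blast
  next
    case False
    show ?thesis
    proof (cases "opposite B U U'")
      case True thus ?thesis using path_opp[OF U U' True] by blast
    next
      case F2: False thus ?thesis using path_nonopp[OF U U' False F2] by blast
    qed
  qed
  show "gdist U U' \<le> k + 1"
  proof (cases "U = U'")
    case True thus ?thesis using dist_le[OF walk_single[OF U]] by simp
  next
    case False
    show ?thesis
    proof (cases "opposite B U U'")
      case True thus ?thesis using dist_opp[OF U U' True] by simp
    next
      case F2: False thus ?thesis using dist_nonopp[OF U U' False F2] by simp
    qed
  qed
next
  obtain U U' where U: "vert U" "vert U'" "opposite B U U'" "dim (U \<inter> U') = 0" using antipodal by blast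
  have "gdist U U' = Suc (k - dim (U \<inter> U'))" by (rule dist_opp[OF U(1,2,3)])
  hence "gdist U U' = k + 1" unfolding U(4) by simp
  thus "\<exists>U U'. vert U \<and> vert U' \<and> gdist U U' = k + 1" using U by blast
qed

end

lemma inst_symp:
  assumes W: "formed_space Symplectic scale B Q \<omega>" and k: "1 \<le> k" "k < \<omega>"
  shows "fsw scale B id (\<lambda>_. True) Symplectic Q \<omega> k"
proof -
  have vs: "vector_space scale" and fd: "fin_dim scale" and bf: "bilinear_form scale B"
    and alt: "\<forall>v. B v v = 0" and nd: "nondegenerate_form B"
    and ex: "\<exists>U. singular Symplectic scale B Q U \<and> vector_space.dim scale U = \<omega>"
    and mx: "\<forall>U. singular Symplectic scale B Q U \<longrightarrow> vector_space.dim scale U \<le> \<omega>"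
    using W unfolding formed_space_def by auto
  interpret vector_space scale by (rule vs)
  have add1: "B (u + v) w = B u w + B v w" and add2: "B u (v + w) = B u v + B u w"
    and sc1: "B (scale c u) v = c * B u v" and sc2: "B u (scale c v) = c * B u v" for u v w c
    using bf unfolding bilinear_form_def by auto
  have anti: "B u v + B v u = 0" for u v
  proof -
    have "0 = B (u + v) (u + v)" using alt by simp
    also have "\<dots> = B u u + B u v + (B v u + B v v)" by (simp add: add1 add2)
    finally show ?thesis using alt by simp
  qed
  show ?thesis
  proof (unfold_locales)
    show "\<exists>S. finite S \<and> span S = UNIV" using fd unfolding fin_dim_def by simp
    show "B (u + v) w = B u w + B v w" "B u (v + w) = B u v + B u w"
      "B (scale c u) v = c * B u v" "B u (scale c v) = id c * B u v" for u v w c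
      by (simp_all add: add1 add2 sc1 sc2)
    show "id (a + b) = id a + id b" "id (a * b) = id a * id b" "id (id a) = a" for a b by simp_all
    show "(B u v = 0) = (B v u = 0)" for u v using anti[of u v] by (auto simp: add_eq_0_iff)
    show "True" for u by simp
    show "True" for u c by simp
    show "B u u = 0" for u using alt by simp
    show "v = 0" if "\<forall>u. B u v = 0" "True" for v using nd that unfolding nondegenerate_form_def by auto
    show "\<exists>c. True" for x y by simp
    show "singular Symplectic scale B Q U = (subspace U \<and> (\<forall>u\<in>U. True) \<and> (\<forall>u\<in>U. \<forall>v\<in>U. B u v = 0))" for U
      unfolding singular_def by simp
    show "\<exists>U. singular Symplectic scale B Q U \<and> dim U = \<omega>" using ex by simp
    show "singular Symplectic scale B Q U \<Longrightarrow> dim U \<le> \<omega>" for U using mx by simp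
  qed (use k in auto)
qed

lemma inst_orth:
  assumes W: "formed_space Orthogonal scale B Q \<omega>" and k: "1 \<le> k" "k < \<omega>"
  shows "fsw scale B id (\<lambda>v. Q v = 0) Orthogonal Q \<omega> k"
proof -
  have vs: "vector_space scale" and fd: "fin_dim scale" and qf: "quadratic_form scale Q B"
    and nd: "nondegenerate_quadratic Q B"
    and ex: "\<exists>U. singular Orthogonal scale B Q U \<and> vector_space.dim scale U = \<omega>"
    and mx: "\<forall>U. singular Orthogonal scale B Q U \<longrightarrow> vector_space.dim scale U \<le> \<omega>"
    using W unfolding formed_space_def by auto
  interpret vector_space scale by (rule vs)
  have Qs: "Q (scale c v) = c ^ 2 * Q v" and Bq: "B u v = Q (u + v) - Q u - Q v" for c u v
    using qf unfolding quadratic_form_def by auto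
  have bf: "bilinear_form scale B" using qf unfolding quadratic_form_def by auto
  have add1: "B (u + v) w = B u w + B v w" and add2: "B u (v + w) = B u v + B u w"
    and sc1: "B (scale c u) v = c * B u v" and sc2: "B u (scale c v) = c * B u v" for u v w c
    using bf unfolding bilinear_form_def by auto
  have sym: "B u v = B v u" for u v using Bq[of u v] Bq[of v u] by (simp add: add.commute)
  have Qadd: "Q (u + v) = B u v + Q u + Q v" for u v using Bq[of u v] by simp
  show ?thesis
  proof (unfold_locales)
    show "\<exists>S. finite S \<and> span S = UNIV" using fd unfolding fin_dim_def by simp
    show "B (u + v) w = B u w + B v w" "B u (v + w) = B u v + B u w"
      "B (scale c u) v = c * B u v" "B u (scale c v) = id c * B u v" for u v w c
      by (simp_all add: add1 add2 sc1 sc2)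
    show "id (a + b) = id a + id b" "id (a * b) = id a * id b" "id (id a) = a" for a b by simp_all
    show "(B u v = 0) = (B v u = 0)" for u v using sym[of u v] by simp
    show "Q (u + v) = 0" if "Q u = 0" "Q v = 0" "B u v = 0" for u v using that Qadd by simp
    show "Q (scale c u) = 0" if "Q u = 0" for u c using that Qs by simp
    show "B u u = 0" if "Q u = 0" for u
    proof -
      have "u + u = scale 2 u" by (metis one_add_one scale_left_distrib scale_one)
      hence "Q (u + u) = 0" using Qs[of 2 u] that by simp
      thus ?thesis using Bq[of u u] that by simp
    qed
    show "v = 0" if "\<forall>u. B u v = 0" "Q v = 0" for v using nd that unfolding nondegenerate_quadratic_def by auto
    show "\<exists>c. Q (y + scale c x) = 0" if "Q x = 0" "B x y \<noteq> 0" for x y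
    proof -
      have Byx: "B y x \<noteq> 0" using that sym by simp
      define c where "c = - Q y / B y x"
      have 1: "B y (scale c x) = - Q y" using sc2[of y c x] Byx unfolding c_def by simp
      have 2: "Q (scale c x) = 0" using Qs[of c x] that by simp
      have "Q (y + scale c x) = B y (scale c x) + Q y + Q (scale c x)" by (rule Qadd)
      hence "Q (y + scale c x) = 0" using 1 2 by simp
      thus ?thesis by blast
    qed
    show "singular Orthogonal scale B Q U = (subspace U \<and> (\<forall>u\<in>U. Q u = 0) \<and> (\<forall>u\<in>U. \<forall>v\<in>U. B u v = 0))" for U
    proof -
      have "(\<forall>u\<in>U. \<forall>v\<in>U. B u v = 0)" if "subspace U" "\<forall>u\<in>U. Q u = 0"
      proof (intro ballI)
        fix u v assume "u \<in> U" "v \<in> U"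
        moreover have "u + v \<in> U" using subspace_add[OF that(1) \<open>u \<in> U\<close> \<open>v \<in> U\<close>] .
        ultimately show "B u v = 0" using Bq[of u v] that(2) by simp
      qed
      thus ?thesis unfolding singular_def by auto
    qed
    show "\<exists>U. singular Orthogonal scale B Q U \<and> dim U = \<omega>" using ex by simp
    show "singular Orthogonal scale B Q U \<Longrightarrow> dim U \<le> \<omega>" for U using mx by simp
  qed (use k in auto)
qed

lemma inst_unit:
  assumes W: "formed_space Unitary scale B Q \<omega>" and k: "1 \<le> k" "k < \<omega>"
  shows "\<exists>\<sigma>. fsw scale B \<sigma> (\<lambda>v. B v v = 0) Unitary Q \<omega> k"
proof -
  have vs: "vector_space scale" and fd: "fin_dim scale"
    and hf: "\<exists>\<sigma>. involutory_automorphism \<sigma> \<and> hermitian_form scale \<sigma> B" and nd: "nondegenerate_form B"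
    and ex: "\<exists>U. singular Unitary scale B Q U \<and> vector_space.dim scale U = \<omega>"
    and mx: "\<forall>U. singular Unitary scale B Q U \<longrightarrow> vector_space.dim scale U \<le> \<omega>"
    using W unfolding formed_space_def by auto
  interpret vector_space scale by (rule vs)
  obtain \<sigma> where ia: "involutory_automorphism \<sigma>" and hm: "hermitian_form scale \<sigma> B" using hf by blast
  have sadd: "\<sigma> (a + b) = \<sigma> a + \<sigma> b" and smul: "\<sigma> (a * b) = \<sigma> a * \<sigma> b" and sinv: "\<sigma> (\<sigma> a) = a" for a b
    using ia unfolding involutory_automorphism_def by auto
  have snid: "\<exists>a. \<sigma> a \<noteq> a" using ia unfolding involutory_automorphism_def by auto
  have add1: "B (u + v) w = B u w + B v w" and add2: "B u (v + w) = B u v + B u w"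
    and sc1: "B (scale c u) v = c * B u v" and sc2: "B u (scale c v) = \<sigma> c * B u v"
    and hs: "B v u = \<sigma> (B u v)" for u v w c
    using hm unfolding hermitian_form_def by blast+
  have s0: "\<sigma> 0 = 0" using sadd[of 0 0] by (metis add_0 add_cancel_right_right)
  have s0iff: "\<sigma> a = 0 \<longleftrightarrow> a = 0" for a by (metis s0 sinv)
  have s1: "\<sigma> 1 = 1"
  proof -
    have "\<sigma> 1 = \<sigma> 1 * \<sigma> 1" using smul[of 1 1] by simp
    moreover have "\<sigma> 1 \<noteq> 0" using s0iff by simp
    ultimately show ?thesis by (metis mult_cancel_left1)
  qed
  have sneg: "\<sigma> (- a) = - \<sigma> a" for a using sadd[of a "- a"] s0 by (simp add: add_eq_0_iff)
  have sinverse: "\<sigma> (inverse a) = inverse (\<sigma> a)" for a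
  proof (cases "a = 0")
    case True thus ?thesis using s0 by simp
  next
    case False
    have "\<sigma> a * \<sigma> (inverse a) = 1" using smul[of a "inverse a"] False s1 by simp
    thus ?thesis by (rule inverse_unique[symmetric])
  qed
  have t0: "\<exists>t. t + \<sigma> t \<noteq> 0"
  proof (rule ccontr)
    assume "\<not> ?thesis"
    hence all: "\<forall>t. t + \<sigma> t = 0" by simp
    have oo: "(1::'a) + 1 = 0" using all[rule_format, of 1] s1 by simp
    have tt: "t + t = 0" for t :: 'a
    proof -
      have "t + t = (1 + 1) * t" by (simp add: distrib_right)
      thus ?thesis using oo by simp
    qed
    have "\<sigma> t = t" for t
    proof -
      have "t + \<sigma> t = t + t" using all[rule_format, of t] tt[of t] by simp
      thus ?thesis by simp
    qed
    thus False using snid by blast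
  qed
  show ?thesis
  proof (intro exI[of _ \<sigma>], unfold_locales)
    show "\<exists>S. finite S \<and> span S = UNIV" using fd unfolding fin_dim_def by simp
    show "B (u + v) w = B u w + B v w" "B u (v + w) = B u v + B u w"
      "B (scale c u) v = c * B u v" "B u (scale c v) = \<sigma> c * B u v" for u v w c
      by (simp_all add: add1 add2 sc1 sc2)
    show "\<sigma> (a + b) = \<sigma> a + \<sigma> b" "\<sigma> (a * b) = \<sigma> a * \<sigma> b" "\<sigma> (\<sigma> a) = a" for a b
      by (simp_all add: sadd smul sinv)
    show "(B u v = 0) = (B v u = 0)" for u v using hs[of u v] s0iff by simp
    show "B (u + v) (u + v) = 0" if "B u u = 0" "B v v = 0" "B u v = 0" for u v
    proof -
      have "B v u = 0" using hs[of v u] that(3) s0 by simp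
      thus ?thesis using that by (simp add: add1 add2)
    qed
    show "B (scale c u) (scale c u) = 0" if "B u u = 0" for u c using that by (simp add: sc1 sc2)
    show "B u u = 0" if "B u u = 0" for u using that .
    show "v = 0" if "\<forall>u. B u v = 0" "B v v = 0" for v using nd that unfolding nondegenerate_form_def by auto
    show "\<exists>c. B (y + scale c x) (y + scale c x) = 0" if x: "B x x = 0" and a: "B x y \<noteq> 0" for x y
    proof -
      obtain t where t: "t + \<sigma> t \<noteq> 0" using t0 by blast
      define s where "s = t + \<sigma> t"
      define b where "b = B y y"
      define a0 where "a0 = B x y"
      have sb: "\<sigma> b = b" unfolding b_def using hs[of y y] by simp
      have ss: "\<sigma> s = s" unfolding s_def using sadd sinv by (simp add: add.commute)
      define l where "l = - b / s"
      have sl: "\<sigma> l = l" unfolding l_def using sb ss by (simp add: divide_inverse smul sneg sinverse)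
      define c where "c = l * t / a0"
      have ca: "c * a0 = l * t" unfolding c_def a0_def using a by simp
      have Byx: "B y x = \<sigma> a0" unfolding a0_def using hs[of x y] hs[of y x] sinv by metis
      have "B (y + scale c x) (y + scale c x) = b + \<sigma> c * B y x + c * a0 + c * (\<sigma> c * B x x)"
        unfolding b_def a0_def by (simp add: add1 add2 sc1 sc2 algebra_simps)
      also have "\<dots> = b + \<sigma> (c * a0) + c * a0" using x Byx smul by simp
      also have "\<dots> = b + l * \<sigma> t + l * t" using ca smul sl by simp
      also have "\<dots> = b + l * s" unfolding s_def by (simp add: algebra_simps)
      also have "\<dots> = 0" unfolding l_def using t s_def by simp
      finally show ?thesis by blast
    qed
    show "singular Unitary scale B Q U = (subspace U \<and> (\<forall>u\<in>U. B u u = 0) \<and> (\<forall>u\<in>U. \<forall>v\<in>U. B u v = 0))" for U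
      unfolding singular_def by auto
    show "\<exists>U. singular Unitary scale B Q U \<and> dim U = \<omega>" using ex by simp
    show "singular Unitary scale B Q U \<Longrightarrow> dim U \<le> \<omega>" for U using mx by simp
  qed (use k in auto)
qed

theorem proposition4p3:
  fixes t :: form_kind
    and scale :: "'a::{field,finite} \<Rightarrow> 'v::ab_group_add \<Rightarrow> 'v"
    and B :: "'v \<Rightarrow> 'v \<Rightarrow> 'a" and Q :: "'v \<Rightarrow> 'a"
    and \<omega> k :: nat and X Y :: "'v set"
  assumes W: "formed_space t scale B Q \<omega>"
    and \<omega>: "\<omega> \<ge> 2"
    and k: "1 \<le> k" "k < \<omega>"
    and X: "pg_vertex t scale B Q k X" and Y: "pg_vertex t scale B Q k Y"
    and XY: "X \<noteq> Y"
  defines "m \<equiv> k - vector_space.dim scale (X \<inter> Y)"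
  shows
   "(\<not> opposite B X Y \<longrightarrow>
       pg_dist t scale B Q k X Y = m \<and>
       (\<forall>P. pg_geodesic t scale B Q k P X Y \<longrightarrow>
          (\<exists>w x y :: nat \<Rightarrow> 'v.
             inj_on w {1..k - m} \<and> \<not> module.dependent scale (w ` {1..k - m}) \<and>
             module.span scale (w ` {1..k - m}) = X \<inter> Y \<and>
             X = module.span scale (x ` {1..m} \<union> w ` {1..k - m}) \<and>
             Y = module.span scale (y ` {1..m} \<union> w ` {1..k - m}) \<and>
             (\<forall>i\<le>m. P ! i = module.span scale
                  (x ` {1..m - i} \<union> y ` {m - i + 1..m} \<union> w ` {1..k - m})) \<and>
             (\<forall>i j. 1 \<le> i \<and> i \<le> j \<and> j \<le> m \<longrightarrow> B (x i) (y j) = 0) \<and>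
             (\<forall>i\<in>{2..m}. (\<forall>j\<in>{1..<i}. B (x i) (y j) = 0) \<or>
                (\<exists>!i'. i' \<in> {1..<i} \<and> B (x i) (y i') = 1 \<and>
                   (\<forall>j\<in>{1..<i}. j \<noteq> i' \<longrightarrow> B (x i) (y j) = 0))) \<and>
             (\<forall>i1 i2 i1' i2'. i1 \<in> {2..m} \<and> i2 \<in> {2..m} \<and> i1 \<noteq> i2 \<and>
                i1' \<in> {1..<i1} \<and> B (x i1) (y i1') = 1 \<and>
                (\<forall>j\<in>{1..<i1}. j \<noteq> i1' \<longrightarrow> B (x i1) (y j) = 0) \<and>
                i2' \<in> {1..<i2} \<and> B (x i2) (y i2') = 1 \<and>
                (\<forall>j\<in>{1..<i2}. j \<noteq> i2' \<longrightarrow> B (x i2) (y j) = 0) \<longrightarrow> i1' \<noteq> i2'))))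
    \<and>
    (opposite B X Y \<longrightarrow>
       pg_dist t scale B Q k X Y = m + 1 \<and>
       (\<forall>P. pg_geodesic t scale B Q k P X Y \<longrightarrow>
          (\<exists>w x y :: nat \<Rightarrow> 'v.
             inj_on w {1..k - m} \<and> \<not> module.dependent scale (w ` {1..k - m}) \<and>
             module.span scale (w ` {1..k - m}) = X \<inter> Y \<and>
             X = module.span scale (x ` {1..m} \<union> w ` {1..k - m}) \<and>
             Y = module.span scale (y ` {1..m} \<union> w ` {1..k - m}) \<and>
             P ! 0 = X \<and>
             (\<forall>i\<le>m. P ! Suc i = module.span scale
                  (x ` {0..<m - i} \<union> y ` {m - i + 1..m} \<union> w ` {1..k - m})) \<and>
             (\<forall>i j. i < j \<and> j \<le> m \<longrightarrow> B (x i) (y j) = 0) \<and>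
             (\<forall>i\<in>{1..m}. B (x i) (y i) = 1) \<and>
             (\<forall>i j. 1 \<le> j \<and> j < i \<and> i \<le> m \<longrightarrow> B (x i) (y j) = 0))))
    \<and>
    ((\<forall>U U'. pg_vertex t scale B Q k U \<and> pg_vertex t scale B Q k U' \<longrightarrow>
        (\<exists>P. pg_walk t scale B Q k P U U') \<and> pg_dist t scale B Q k U U' \<le> k + 1) \<and>
     (\<exists>U U'. pg_vertex t scale B Q k U \<and> pg_vertex t scale B Q k U' \<and>
        pg_dist t scale B Q k U U' = k + 1))"
proof -
  have "\<exists>\<sigma> sv. fsw scale B \<sigma> sv t Q \<omega> k"
  proof (cases t)
    case Symplectic
    thus ?thesis using inst_symp[of scale B Q \<omega> k] W k by blast
  next
    case Orthogonal
    thus ?thesis using inst_orth[of scale B Q \<omega> k] W k by blast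
  next
    case Unitary
    thus ?thesis using inst_unit[of scale B Q \<omega> k] W k by blast
  qed
  then obtain \<sigma> sv where I: "fsw scale B \<sigma> sv t Q \<omega> k" by blast
  show ?thesis by (rule fsw.main[OF I X Y XY m_def[THEN meta_eq_to_obj_eq]])
qed

end
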